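(* Let $w=\{w_k\}_{k\ge1}$ be a nondecreasing sequence with $w_1\ge0$, and let $\gamma_1=w_1$, $\gamma_k=w_k-w_{k-1}$ ($k\ge2$), $\gamma=\{\gamma_k\}$. If $f\in H^2$, $\theta$ is an inner function, and $\{g_n\}$ is an orthonormal basis in $K_\theta$, then $$\|f\theta\|_w^2=\|f\|_w^2+\sum_n\|zfg_n\|_\gamma^2$$ as an identity in $[0,\infty]$.
   Context: $H^2$ is the Hardy space on the unit disk (boundary functions on $\mathbb T$). Inner function: $\theta\in H^\infty$ with $|\theta|=1$ a.e. on $\mathbb T$; $K_\theta=H^2\ominus\theta H^2$. For a nonnegative sequence $v=\{v_k\}_{k\ge1}$ and an analytic function $h$ on the disk with Taylor coefficients $\widehat h(k)$, $\|h\|_v:=\big(\sum_{k\ge1}v_k|\widehat h(k)|^2\big)^{1/2}\in[0,\infty]$. *)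

theory Defs
  imports "HOL-Analysis.Analysis"
begin

text \<open>Functions on the unit disk are represented as functions complex => complex;
only their values on the open unit disk matter.\<close>

definition taylor_coeff :: "(complex \<Rightarrow> complex) \<Rightarrow> nat \<Rightarrow> complex" where
  "taylor_coeff h k = (deriv ^^ k) h 0 / of_nat (fact k)"

definition H2 :: "(complex \<Rightarrow> complex) set" where
  "H2 = {f. f holomorphic_on ball 0 1 \<and> summable (\<lambda>k. (cmod (taylor_coeff f k))\<^sup>2)}"

definition H2_inner :: "(complex \<Rightarrow> complex) \<Rightarrow> (complex \<Rightarrow> complex) \<Rightarrow> complex" where
  "H2_inner f g = (\<Sum>k. taylor_coeff f k * cnj (taylor_coeff g k))"

definition Hinf :: "(complex \<Rightarrow> complex) set" where
  "Hinf = {f. f holomorphic_on ball 0 1 \<and> (\<exists>B. \<forall>z\<in>ball 0 1. cmod (f z) \<le> B)}"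

definition inner_function :: "(complex \<Rightarrow> complex) \<Rightarrow> bool" where
  "inner_function \<theta> \<longleftrightarrow> \<theta> \<in> Hinf \<and>
     (AE t in lebesgue_on {0..2*pi}. \<exists>L. ((\<lambda>r::real. \<theta> (complex_of_real r * cis t)) \<longlongrightarrow> L) (at_left 1)
                                         \<and> cmod L = 1)"

definition model_space :: "(complex \<Rightarrow> complex) \<Rightarrow> (complex \<Rightarrow> complex) set" where
  "model_space \<theta> = {g \<in> H2. \<forall>h\<in>H2. H2_inner g (\<lambda>z. \<theta> z * h z) = 0}"

definition orthonormal_basis_of :: "(complex \<Rightarrow> complex) set \<Rightarrow> 'i set \<Rightarrow> ('i \<Rightarrow> complex \<Rightarrow> complex) \<Rightarrow> bool" where
  "orthonormal_basis_of K I g \<longleftrightarrow>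
     (\<forall>n\<in>I. g n \<in> K) \<and>
     (\<forall>n\<in>I. \<forall>m\<in>I. H2_inner (g n) (g m) = (if n = m then 1 else 0)) \<and>
     (\<forall>h\<in>K. (\<forall>n\<in>I. H2_inner h (g n) = 0) \<longrightarrow> (\<forall>k. taylor_coeff h k = 0))"

definition wnorm_sq :: "(nat \<Rightarrow> real) \<Rightarrow> (complex \<Rightarrow> complex) \<Rightarrow> ennreal" where
  "wnorm_sq v h = (\<Sum>k. ennreal (v (Suc k) * (cmod (taylor_coeff h (Suc k)))\<^sup>2))"

end

theory Submission
  imports Defs "HOL-Complex_Analysis.Complex_Analysis" "HOL-Real_Asymp.Real_Asymp"
begin


definition l2 :: "(nat \<Rightarrow> complex) \<Rightarrow> bool" where
  "l2 a \<longleftrightarrow> summable (\<lambda>k. (cmod (a k))\<^sup>2)"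
definition ip :: "(nat \<Rightarrow> complex) \<Rightarrow> (nat \<Rightarrow> complex) \<Rightarrow> complex" where
  "ip a b = (\<Sum>k. a k * cnj (b k))"
definition nsq :: "(nat \<Rightarrow> complex) \<Rightarrow> real" where
  "nsq a = (\<Sum>k. (cmod (a k))\<^sup>2)"

lemma nsq_nonneg: "l2 a \<Longrightarrow> nsq a \<ge> 0"
  unfolding nsq_def l2_def by (intro suminf_nonneg) auto

lemma l2_summable_prod:
  assumes "l2 a" "l2 b"
  shows "summable (\<lambda>k. cmod (a k) * cmod (b k))"
proof (rule summable_comparison_test')
  show "summable (\<lambda>k. ((cmod (a k))\<^sup>2 + (cmod (b k))\<^sup>2))"
    using assms unfolding l2_def by (intro summable_add)
  fix k
  have "2 * (cmod (a k) * cmod (b k)) \<le> (cmod (a k))\<^sup>2 + (cmod (b k))\<^sup>2"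
    using sum_squares_bound[of "cmod (a k)" "cmod (b k)"] by simp
  moreover have "0 \<le> cmod (a k) * cmod (b k)" by simp
  moreover have "norm (cmod (a k) * cmod (b k)) = cmod (a k) * cmod (b k)" by simp
  ultimately show "norm (cmod (a k) * cmod (b k)) \<le> (cmod (a k))\<^sup>2 + (cmod (b k))\<^sup>2"
    by linarith
qed

lemma l2_ip_summable:
  assumes "l2 a" "l2 b"
  shows "summable (\<lambda>k. a k * cnj (b k))"
  by (rule summable_norm_cancel, rule summable_comparison_test'[OF l2_summable_prod[OF assms]])
     (simp add: norm_mult)

lemma l2_add: "l2 a \<Longrightarrow> l2 b \<Longrightarrow> l2 (\<lambda>k. a k + b k)"
  unfolding l2_def
proof -
  assume a: "summable (\<lambda>k. (cmod (a k))\<^sup>2)" and b: "summable (\<lambda>k. (cmod (b k))\<^sup>2)"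
  show "summable (\<lambda>k. (cmod (a k + b k))\<^sup>2)"
  proof (rule summable_comparison_test')
    show "summable (\<lambda>k. 2 * (cmod (a k))\<^sup>2 + 2 * (cmod (b k))\<^sup>2)"
      using a b by (intro summable_add summable_mult)
    fix k
    have "cmod (a k + b k) \<le> cmod (a k) + cmod (b k)" by (rule norm_triangle_ineq)
    then have "(cmod (a k + b k))\<^sup>2 \<le> (cmod (a k) + cmod (b k))\<^sup>2"
      by (intro power_mono) auto
    also have "\<dots> \<le> 2 * (cmod (a k))\<^sup>2 + 2 * (cmod (b k))\<^sup>2"
      using sum_squares_bound[of "cmod (a k)" "cmod (b k)"] by (simp add: power2_sum)
    finally show "norm ((cmod (a k + b k))\<^sup>2) \<le> 2 * (cmod (a k))\<^sup>2 + 2 * (cmod (b k))\<^sup>2"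
      by simp
  qed
qed

lemma l2_scale: "l2 a \<Longrightarrow> l2 (\<lambda>k. c * a k)"
  unfolding l2_def by (simp add: norm_mult power_mult_distrib summable_mult)

lemma l2_uminus: "l2 a \<Longrightarrow> l2 (\<lambda>k. - a k)"
  unfolding l2_def by simp

lemma l2_diff: "l2 a \<Longrightarrow> l2 b \<Longrightarrow> l2 (\<lambda>k. a k - b k)"
  using l2_add[of a "\<lambda>k. - b k"] l2_uminus[of b] by simp

lemma l2_zero: "l2 (\<lambda>k. 0)"
  unfolding l2_def by simp

lemma l2_finite_support: "(\<And>k. k \<ge> N \<Longrightarrow> a k = 0) \<Longrightarrow> l2 a"
  unfolding l2_def by (rule summable_finite[of "{..<N}"]) auto

lemma l2_sum: "finite F \<Longrightarrow> (\<And>n. n \<in> F \<Longrightarrow> l2 (x n)) \<Longrightarrow> l2 (\<lambda>k. \<Sum>n\<in>F. x n k)"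
  by (induction F rule: finite_induct) (auto intro: l2_add l2_zero)

lemma nsq_sums: "l2 a \<Longrightarrow> (\<lambda>k. (cmod (a k))\<^sup>2) sums nsq a"
  unfolding l2_def nsq_def by (simp add: summable_sums)

lemma ip_sums: "l2 a \<Longrightarrow> l2 b \<Longrightarrow> (\<lambda>k. a k * cnj (b k)) sums ip a b"
  unfolding ip_def by (simp add: summable_sums l2_ip_summable)

lemma ip_self: "l2 a \<Longrightarrow> ip a a = of_real (nsq a)"
  unfolding ip_def nsq_def l2_def
proof -
  assume s: "summable (\<lambda>k. (cmod (a k))\<^sup>2)"
  have "\<And>k. a k * cnj (a k) = of_real ((cmod (a k))\<^sup>2)"
    by (rule complex_norm_square[symmetric])
  then show "(\<Sum>k. a k * cnj (a k)) = of_real (\<Sum>k. (cmod (a k))\<^sup>2)"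
    using suminf_of_real[OF s, where 'a=complex] by simp
qed

lemma ip_add_left: "l2 a \<Longrightarrow> l2 b \<Longrightarrow> l2 c \<Longrightarrow> ip (\<lambda>k. a k + b k) c = ip a c + ip b c"
  unfolding ip_def by (simp add: distrib_right suminf_add l2_ip_summable)

lemma ip_diff_left: "l2 a \<Longrightarrow> l2 b \<Longrightarrow> l2 c \<Longrightarrow> ip (\<lambda>k. a k - b k) c = ip a c - ip b c"
  unfolding ip_def by (simp add: left_diff_distrib suminf_diff l2_ip_summable)

lemma ip_scale_left: "l2 a \<Longrightarrow> l2 c \<Longrightarrow> ip (\<lambda>k. s * a k) c = s * ip a c"
  unfolding ip_def by (simp add: mult.assoc suminf_mult l2_ip_summable)

lemma ip_sum_left: "finite F \<Longrightarrow> (\<And>n. n \<in> F \<Longrightarrow> l2 (x n)) \<Longrightarrow> l2 c \<Longrightarrow>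
   ip (\<lambda>k. \<Sum>n\<in>F. x n k) c = (\<Sum>n\<in>F. ip (x n) c)"
proof (induction F rule: finite_induct)
  case empty then show ?case by (simp add: ip_def)
next
  case (insert n F)
  have "ip (\<lambda>k. \<Sum>n\<in>insert n F. x n k) c = ip (\<lambda>k. x n k + (\<Sum>n\<in>F. x n k)) c"
    using insert.hyps by simp
  also have "\<dots> = ip (x n) c + ip (\<lambda>k. \<Sum>n\<in>F. x n k) c"
    using insert.prems insert.hyps by (intro ip_add_left l2_sum) auto
  finally show ?case using insert by simp
qed

lemma suminf_cnj: "summable f \<Longrightarrow> cnj (suminf f) = (\<Sum>k. cnj (f k))"
proof -
  assume True: "summable f"
  then have "(\<lambda>k. cnj (f k)) sums cnj (suminf f)"
    by (simp add: sums_cnj summable_sums)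
  then show ?thesis by (simp add: sums_iff)
qed

lemma ip_cnj: "l2 a \<Longrightarrow> l2 b \<Longrightarrow> ip b a = cnj (ip a b)"
  unfolding ip_def by (simp add: suminf_cnj l2_ip_summable mult.commute)

lemma Re_suminf: "summable f \<Longrightarrow> Re (suminf f) = (\<Sum>k. Re (f k))"
  using bounded_linear.suminf[OF bounded_linear_Re] by blast

lemma cmod_diff_sq: "(cmod (x - y))\<^sup>2 = (cmod x)\<^sup>2 + (cmod y)\<^sup>2 - 2 * Re (x * cnj y)"
  unfolding cmod_power2 by (simp add: power2_eq_square algebra_simps)

lemma nsq_diff:
  assumes "l2 a" "l2 b"
  shows "nsq (\<lambda>k. a k - b k) = nsq a + nsq b - 2 * Re (ip a b)"
proof -
  have s: "summable (\<lambda>k. Re (a k * cnj (b k)))"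
    using l2_ip_summable[OF assms] by (rule summable_Re)
  have "nsq (\<lambda>k. a k - b k) = (\<Sum>k. (cmod (a k))\<^sup>2 + (cmod (b k))\<^sup>2 - 2 * Re (a k * cnj (b k)))"
    unfolding nsq_def by (simp add: cmod_diff_sq)
  also have "\<dots> = nsq a + nsq b - 2 * (\<Sum>k. Re (a k * cnj (b k)))"
  proof -
    have sa: "summable (\<lambda>k. (cmod (a k))\<^sup>2)" and sb: "summable (\<lambda>k. (cmod (b k))\<^sup>2)"
      using assms unfolding l2_def by auto
    have "(\<Sum>k. (cmod (a k))\<^sup>2 + (cmod (b k))\<^sup>2 - 2 * Re (a k * cnj (b k)))
       = (\<Sum>k. (cmod (a k))\<^sup>2 + (cmod (b k))\<^sup>2) - (\<Sum>k. 2 * Re (a k * cnj (b k)))"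
      by (rule suminf_diff[symmetric]) (use sa sb summable_mult[OF s, of 2] in \<open>auto intro: summable_add\<close>)
    also have "(\<Sum>k. (cmod (a k))\<^sup>2 + (cmod (b k))\<^sup>2) = nsq a + nsq b"
      unfolding nsq_def by (rule suminf_add[symmetric]) (use sa sb in auto)
    also have "(\<Sum>k. 2 * Re (a k * cnj (b k))) = 2 * (\<Sum>k. Re (a k * cnj (b k)))"
      by (rule suminf_mult[OF s])
    finally show ?thesis .
  qed
  also have "(\<Sum>k. Re (a k * cnj (b k))) = Re (ip a b)"
    unfolding ip_def by (rule Re_suminf[symmetric], rule l2_ip_summable[OF assms])
  finally show ?thesis .
qed

lemma nsq_le_partial:
  assumes "\<And>n. (\<Sum>k<n. (cmod (a k))\<^sup>2) \<le> e"
  shows "l2 a" "nsq a \<le> e"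
proof -
  show l: "l2 a" unfolding l2_def by (rule summableI_nonneg_bounded[OF _ assms]) auto
  show "nsq a \<le> e" unfolding nsq_def
    by (rule suminf_le_const[OF l[unfolded l2_def] assms])
qed

lemma partial_le_nsq: "l2 a \<Longrightarrow> finite F \<Longrightarrow> (\<Sum>k\<in>F. (cmod (a k))\<^sup>2) \<le> nsq a"
  unfolding l2_def nsq_def by (rule sum_le_suminf) auto

lemma coeff_le_nsq: "l2 a \<Longrightarrow> (cmod (a k))\<^sup>2 \<le> nsq a"
  using partial_le_nsq[of a "{k}"] by simp

lemma CS_ip: 
  assumes "l2 a" "l2 b"
  shows "cmod (ip a b) \<le> sqrt (nsq a) * sqrt (nsq b)"
proof -
  have s: "summable (\<lambda>k. cmod (a k) * cmod (b k))" by (rule l2_summable_prod[OF assms])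
  have "cmod (ip a b) \<le> (\<Sum>k. norm (a k * cnj (b k)))"
    unfolding ip_def by (rule summable_norm) (use s in \<open>simp add: norm_mult\<close>)
  also have "\<dots> = (\<Sum>k. cmod (a k) * cmod (b k))" by (simp add: norm_mult)
  also have "\<dots> \<le> sqrt (nsq a) * sqrt (nsq b)"
  proof (rule suminf_le_const[OF s])
    fix n
    have "(\<Sum>k<n. cmod (a k) * cmod (b k)) = (\<Sum>k<n. \<bar>cmod (a k)\<bar> * \<bar>cmod (b k)\<bar>)" by simp
    also have "\<dots> \<le> L2_set (\<lambda>k. cmod (a k)) {..<n} * L2_set (\<lambda>k. cmod (b k)) {..<n}"
      by (rule L2_set_mult_ineq)
    also have "\<dots> \<le> sqrt (nsq a) * sqrt (nsq b)"
      unfolding L2_set_def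
      by (intro mult_mono real_sqrt_le_mono partial_le_nsq assms) (auto intro: sum_nonneg nsq_nonneg assms)
    finally show "(\<Sum>k<n. cmod (a k) * cmod (b k)) \<le> sqrt (nsq a) * sqrt (nsq b)" .
  qed
  finally show ?thesis .
qed

lemma ip_continuous:
  assumes "\<And>N. l2 (x N)" "l2 z" "l2 g"
    and lim: "(\<lambda>N. nsq (\<lambda>k. x N k - z k)) \<longlonglongrightarrow> 0"
  shows "(\<lambda>N. ip (x N) g) \<longlonglongrightarrow> ip z g"
proof -
  have eq: "ip (x N) g - ip z g = ip (\<lambda>k. x N k - z k) g" for N
    using assms by (simp add: ip_diff_left)
  have "(\<lambda>N. sqrt (nsq (\<lambda>k. x N k - z k)) * sqrt (nsq g)) \<longlonglongrightarrow> sqrt 0 * sqrt (nsq g)"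
    by (intro tendsto_intros lim)
  then have "(\<lambda>N. sqrt (nsq (\<lambda>k. x N k - z k)) * sqrt (nsq g)) \<longlonglongrightarrow> 0" by simp
  moreover have "norm (ip (x N) g - ip z g) \<le> sqrt (nsq (\<lambda>k. x N k - z k)) * sqrt (nsq g)" for N
    unfolding eq by (rule CS_ip) (use assms in \<open>auto intro: l2_diff\<close>)
  ultimately have "(\<lambda>N. ip (x N) g - ip z g) \<longlonglongrightarrow> 0"
    using Lim_null_comparison[of "\<lambda>N. ip (x N) g - ip z g"
          "\<lambda>N. sqrt (nsq (\<lambda>k. x N k - z k)) * sqrt (nsq g)" sequentially]
    by (auto intro: always_eventually)
  then show ?thesis by (simp add: LIM_zero_iff)
qed

lemma nsq_continuous:
  assumes "\<And>N. l2 (x N)" "l2 z"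
    and lim: "(\<lambda>N. nsq (\<lambda>k. x N k - z k)) \<longlonglongrightarrow> 0"
  shows "(\<lambda>N. nsq (x N)) \<longlonglongrightarrow> nsq z"
proof -
  have eq: "nsq (x N) = nsq (\<lambda>k. x N k - z k) + nsq z + 2 * Re (ip (\<lambda>k. x N k - z k) z)" for N
  proof -
    have "nsq (\<lambda>k. (x N k - z k) - (- z k)) = nsq (\<lambda>k. x N k - z k) + nsq (\<lambda>k. - z k)
           - 2 * Re (ip (\<lambda>k. x N k - z k) (\<lambda>k. - z k))"
      by (rule nsq_diff) (use assms in \<open>auto intro: l2_diff l2_uminus\<close>)
    moreover have "nsq (\<lambda>k. - z k) = nsq z" by (simp add: nsq_def)
    moreover have "ip (\<lambda>k. x N k - z k) (\<lambda>k. - z k) = - ip (\<lambda>k. x N k - z k) z"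
      unfolding ip_def
      using suminf_minus[OF l2_ip_summable[OF l2_diff[OF assms(1) assms(2)] assms(2)]] by simp
    ultimately show ?thesis by simp
  qed
  have "(\<lambda>N. ip (\<lambda>k. x N k - z k) z) \<longlonglongrightarrow> ip (\<lambda>k. z k - z k) z"
    by (rule ip_continuous) (use assms in \<open>auto intro: l2_diff l2_zero\<close>)
  then have i: "(\<lambda>N. ip (\<lambda>k. x N k - z k) z) \<longlonglongrightarrow> 0" by (simp add: ip_def)
  have "(\<lambda>N. nsq (\<lambda>k. x N k - z k) + nsq z + 2 * Re (ip (\<lambda>k. x N k - z k) z)) \<longlonglongrightarrow> 0 + nsq z + 2 * Re 0"
    by (intro tendsto_intros lim i)
  then show ?thesis unfolding eq by simp
qed

lemma l2_complete:
  assumes l: "\<And>N. l2 (x N)"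
    and C: "\<And>e. e > 0 \<Longrightarrow> \<exists>M. \<forall>N\<ge>M. \<forall>N'\<ge>M. nsq (\<lambda>k. x N k - x N' k) < e"
  shows "\<exists>z. l2 z \<and> (\<lambda>N. nsq (\<lambda>k. x N k - z k)) \<longlonglongrightarrow> 0"
proof -
  have Ck: "Cauchy (\<lambda>N. x N k)" for k
  proof (rule metric_CauchyI)
    fix e :: real assume "e > 0"
    then obtain M where M: "\<forall>N\<ge>M. \<forall>N'\<ge>M. nsq (\<lambda>k. x N k - x N' k) < e\<^sup>2" using C[of "e\<^sup>2"] by auto
    show "\<exists>M. \<forall>m\<ge>M. \<forall>n\<ge>M. dist (x m k) (x n k) < e"
    proof (intro exI allI impI)
      fix m n assume "m \<ge> M" "n \<ge> M"
      then have "(cmod (x m k - x n k))\<^sup>2 < e\<^sup>2"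
        using coeff_le_nsq[of "\<lambda>k. x m k - x n k" k] M l2_diff[OF l l] by fastforce
      then show "dist (x m k) (x n k) < e"
        using \<open>e > 0\<close> by (simp add: dist_norm power_less_imp_less_base)
    qed
  qed
  define z where "z k = lim (\<lambda>N. x N k)" for k
  have zl: "(\<lambda>N. x N k) \<longlonglongrightarrow> z k" for k
    unfolding z_def using Ck[of k] by (simp add: Cauchy_convergent_iff convergent_LIMSEQ_iff)
  have bound: "l2 (\<lambda>k. x N k - z k) \<and> nsq (\<lambda>k. x N k - z k) \<le> e"
    if "e > 0" "\<forall>N\<ge>M. \<forall>N'\<ge>M. nsq (\<lambda>k. x N k - x N' k) < e" "N \<ge> M" for e M N
  proof -
    have "(\<Sum>k<n. (cmod (x N k - z k))\<^sup>2) \<le> e" for n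
    proof (rule LIMSEQ_le_const2)
      show "(\<lambda>N'. \<Sum>k<n. (cmod (x N k - x N' k))\<^sup>2) \<longlonglongrightarrow> (\<Sum>k<n. (cmod (x N k - z k))\<^sup>2)"
        by (intro tendsto_intros zl)
      show "\<exists>N0. \<forall>N'\<ge>N0. (\<Sum>k<n. (cmod (x N k - x N' k))\<^sup>2) \<le> e"
      proof (intro exI allI impI)
        fix N' assume "N' \<ge> M"
        then have "(\<Sum>k<n. (cmod (x N k - x N' k))\<^sup>2) \<le> nsq (\<lambda>k. x N k - x N' k)"
          by (intro partial_le_nsq l2_diff l) auto
        also have "\<dots> < e" using that \<open>N' \<ge> M\<close> by auto
        finally show "(\<Sum>k<n. (cmod (x N k - x N' k))\<^sup>2) \<le> e" by simp
      qed
    qed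
    then show ?thesis using nsq_le_partial[of "\<lambda>k. x N k - z k" e] by auto
  qed
  obtain M1 where M1: "\<forall>N\<ge>M1. \<forall>N'\<ge>M1. nsq (\<lambda>k. x N k - x N' k) < 1" using C[of 1] by auto
  have lM: "l2 (\<lambda>k. x M1 k - z k)" using bound[of 1 M1 M1] M1 by auto
  have lz: "l2 z" using l2_diff[OF l[of M1] lM] by simp
  have "(\<lambda>N. nsq (\<lambda>k. x N k - z k)) \<longlonglongrightarrow> 0"
  proof (rule LIMSEQ_I)
    fix e :: real assume "e > 0"
    then obtain M where M: "\<forall>N\<ge>M. \<forall>N'\<ge>M. nsq (\<lambda>k. x N k - x N' k) < e/2" using C[of "e/2"] by auto
    show "\<exists>M. \<forall>N\<ge>M. norm (nsq (\<lambda>k. x N k - z k) - 0) < e"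
    proof (intro exI allI impI)
      fix N assume "N \<ge> M"
      then have "l2 (\<lambda>k. x N k - z k) \<and> nsq (\<lambda>k. x N k - z k) \<le> e/2"
        using bound[of "e/2" M N] M \<open>e > 0\<close> by auto
      then show "norm (nsq (\<lambda>k. x N k - z k) - 0) < e"
        using nsq_nonneg[of "\<lambda>k. x N k - z k"] \<open>e > 0\<close> by auto
    qed
  qed
  with lz show ?thesis by blast
qed

lemma nsq_diff_le:
  assumes "l2 a" "l2 b"
  shows "nsq (\<lambda>k. a k - b k) \<le> 2 * nsq a + 2 * nsq b"
proof -
  have "nsq (\<lambda>k. a k - b k) = (\<Sum>k. (cmod (a k - b k))\<^sup>2)" unfolding nsq_def ..
  also have "\<dots> \<le> (\<Sum>k. 2 * (cmod (a k))\<^sup>2 + 2 * (cmod (b k))\<^sup>2)"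
  proof (rule suminf_le)
    fix k
    have "cmod (a k - b k) \<le> cmod (a k) + cmod (b k)" by (rule norm_triangle_ineq4)
    then have "(cmod (a k - b k))\<^sup>2 \<le> (cmod (a k) + cmod (b k))\<^sup>2" by (intro power_mono) auto
    also have "\<dots> \<le> 2 * (cmod (a k))\<^sup>2 + 2 * (cmod (b k))\<^sup>2"
      using sum_squares_bound[of "cmod (a k)" "cmod (b k)"] by (simp add: power2_sum)
    finally show "(cmod (a k - b k))\<^sup>2 \<le> 2 * (cmod (a k))\<^sup>2 + 2 * (cmod (b k))\<^sup>2" .
    show "summable (\<lambda>k. (cmod (a k - b k))\<^sup>2)" using l2_diff[OF assms] unfolding l2_def .
    show "summable (\<lambda>k. 2 * (cmod (a k))\<^sup>2 + 2 * (cmod (b k))\<^sup>2)"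
      using assms unfolding l2_def by (intro summable_add summable_mult)
  qed
  also have "\<dots> = 2 * nsq a + 2 * nsq b"
  proof -
    have sa: "summable (\<lambda>k. 2 * (cmod (a k))\<^sup>2)" and sb: "summable (\<lambda>k. 2 * (cmod (b k))\<^sup>2)"
      using assms unfolding l2_def by (auto intro: summable_mult)
    have "(\<Sum>k. 2 * (cmod (a k))\<^sup>2 + 2 * (cmod (b k))\<^sup>2) = (\<Sum>k. 2 * (cmod (a k))\<^sup>2) + (\<Sum>k. 2 * (cmod (b k))\<^sup>2)"
      by (rule suminf_add[OF sa sb, symmetric])
    also have "\<dots> = 2 * nsq a + 2 * nsq b"
      using assms unfolding l2_def nsq_def by (simp add: suminf_mult)
    finally show ?thesis .
  qed
  finally show ?thesis .
qed


lemma taylor_coeff_mult: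
  assumes "f holomorphic_on ball 0 1" "g holomorphic_on ball 0 1"
  shows "taylor_coeff (\<lambda>z. f z * g z) n = (\<Sum>i=0..n. taylor_coeff f i * taylor_coeff g (n - i))"
proof -
  have "taylor_coeff (\<lambda>z. f z * g z) n =
     (\<Sum>i = 0..n. of_nat (n choose i) * (deriv ^^ i) f 0 * (deriv ^^ (n-i)) g 0) / of_nat (fact n)"
    unfolding taylor_coeff_def by (subst higher_deriv_mult[OF assms]) auto
  also have "\<dots> = (\<Sum>i=0..n. of_nat (n choose i) * (deriv ^^ i) f 0 * (deriv ^^ (n-i)) g 0 / of_nat (fact n))"
    by (rule sum_divide_distrib)
  also have "\<dots> = (\<Sum>i=0..n. taylor_coeff f i * taylor_coeff g (n - i))"
  proof (rule sum.cong[OF refl])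
    fix i assume "i \<in> {0..n}"
    then have i: "i \<le> n" by simp
    have "(of_nat (n choose i) :: complex) = fact n / (fact i * fact (n - i))"
      by (rule binomial_fact[OF i])
    then show "of_nat (n choose i) * (deriv ^^ i) f 0 * (deriv ^^ (n-i)) g 0 / of_nat (fact n) =
          taylor_coeff f i * taylor_coeff g (n - i)"
      unfolding taylor_coeff_def by (simp add: field_simps)
  qed
  finally show ?thesis .
qed

definition mkf :: "(nat \<Rightarrow> complex) \<Rightarrow> complex \<Rightarrow> complex" where
  "mkf a = eval_fps (Abs_fps a)"

lemma conv_radius_bounded:
  assumes "\<And>k. cmod (a k) \<le> B"
  shows "fps_conv_radius (Abs_fps a) \<ge> 1"
  unfolding fps_conv_radius_def
proof (rule conv_radius_geI_ex)
  fix r :: real assume r: "0 < r" "ereal r < 1"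
  then have r1: "r < 1" by simp
  show "\<exists>z. norm z = r \<and> summable (\<lambda>n. Abs_fps a $ n * z ^ n)"
  proof (intro exI conjI)
    show "norm (complex_of_real r) = r" using r by simp
    show "summable (\<lambda>n. Abs_fps a $ n * complex_of_real r ^ n)"
    proof (rule summable_comparison_test')
      show "summable (\<lambda>n. B * r ^ n)" using r r1 by (intro summable_mult summable_geometric) auto
      fix n
      show "norm (Abs_fps a $ n * complex_of_real r ^ n) \<le> B * r ^ n"
        using assms[of n] r by (simp add: norm_mult norm_power mult_right_mono)
    qed
  qed
qed

lemma mkf_props:
  assumes "\<And>k. cmod (a k) \<le> B"
  shows "mkf a holomorphic_on ball 0 1" "taylor_coeff (mkf a) n = a n"
proof -
  have c: "fps_conv_radius (Abs_fps a) \<ge> 1" by (rule conv_radius_bounded[OF assms])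
  show "mkf a holomorphic_on ball 0 1"
    unfolding mkf_def
  proof (rule holomorphic_on_eval_fps, rule subsetI)
    fix t :: complex assume "t \<in> ball 0 1"
    then have "ereal (cmod t) < 1" by simp
    then have "ereal (cmod t) < fps_conv_radius (Abs_fps a)"
      using c by (rule order.strict_trans2)
    then show "t \<in> eball 0 (fps_conv_radius (Abs_fps a))" by simp
  qed
  have "eval_fps (Abs_fps a) has_fps_expansion Abs_fps a"
    by (rule eval_fps_has_fps_expansion) (rule order.strict_trans2[OF _ c], simp)
  from fps_nth_fps_expansion[OF this, of n] show "taylor_coeff (mkf a) n = a n"
    unfolding mkf_def taylor_coeff_def by simp
qed

lemma l2_bounded: "l2 a \<Longrightarrow> cmod (a k) \<le> sqrt (nsq a)"
  using coeff_le_nsq[of a k] real_le_rsqrt by blast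

lemma mkf_H2:
  assumes "l2 a"
  shows "mkf a \<in> H2" "taylor_coeff (mkf a) = a"
proof -
  note p = mkf_props[OF l2_bounded[OF assms]]
  show "taylor_coeff (mkf a) = a" using p(2) by auto
  then show "mkf a \<in> H2" using p(1) assms unfolding H2_def l2_def by auto
qed

lemma H2_l2: "f \<in> H2 \<Longrightarrow> l2 (taylor_coeff f)"
  unfolding H2_def l2_def by auto

lemma H2_hol: "f \<in> H2 \<Longrightarrow> f holomorphic_on ball 0 1"
  unfolding H2_def by auto

lemma H2_inner_ip: "H2_inner f g = ip (taylor_coeff f) (taylor_coeff g)"
  unfolding H2_inner_def ip_def ..

lemma taylor_coeff_id: "taylor_coeff (\<lambda>z. z) n = (if n = 1 then 1 else 0)"
proof -
  have X: "Abs_fps (\<lambda>n::nat. if n = 1 then (1::complex) else 0) = fps_X"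
    unfolding fps_X_def by simp
  have e: "(\<lambda>z. z) = mkf (\<lambda>n. if n = 1 then 1 else 0)"
    unfolding mkf_def X by (simp add: fun_eq_iff)
  show ?thesis unfolding e by (rule mkf_props(2)[of _ 1]) auto
qed

lemma taylor_coeff_shift:
  assumes "h holomorphic_on ball 0 1"
  shows "taylor_coeff (\<lambda>z. z * h z) (Suc k) = taylor_coeff h k"
proof -
  have "taylor_coeff (\<lambda>z. z * h z) (Suc k) = (\<Sum>i=0..Suc k. taylor_coeff (\<lambda>z. z) i * taylor_coeff h (Suc k - i))"
    by (rule taylor_coeff_mult[OF _ assms]) auto
  also have "\<dots> = (\<Sum>i\<in>{1}. taylor_coeff (\<lambda>z. z) i * taylor_coeff h (Suc k - i))"
    by (rule sum.mono_neutral_right) (auto simp: taylor_coeff_id)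
  finally show ?thesis by (simp add: taylor_coeff_id)
qed


abbreviation "PM \<equiv> lebesgue_on {0..2*pi}"

lemma lint_cont:
  fixes f :: "real \<Rightarrow> complex"
  assumes "continuous_on {0..2*pi} f"
  shows "integrable PM f" "(CLINT t|PM. f t) = integral {0..2*pi} f"
proof -
  show i: "integrable PM f" by (rule continuous_imp_integrable_real[OF assms])
  have "(f has_integral (CLINT t|PM. f t)) {0..2*pi}"
    by (rule has_integral_integral_lebesgue_on[OF i]) simp
  then show "(CLINT t|PM. f t) = integral {0..2*pi} f" by (simp add: integral_unique)
qed

lemma lint_const:
  fixes c :: complex
  shows "integral\<^sup>L PM (\<lambda>t. c) = 2 * pi * c"
proof -
  have "integral\<^sup>L PM (\<lambda>t. c) = integral {0..2*pi} (\<lambda>t. c)"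
    using lint_cont(2)[of "\<lambda>t. c"] by auto
  also have "\<dots> = 2 * pi * c" by (simp add: scaleR_conv_of_real)
  finally show ?thesis .
qed

lemma lint_const_real: "(LINT t|PM. (c::real)) = 2 * pi * c"
proof -
  have "(LINT t|PM. c) = integral {0..2*pi} (\<lambda>t. c)"
    by (rule has_integral_integral_lebesgue_on[THEN integral_unique, symmetric])
       (auto intro: continuous_imp_integrable_real continuous_on_const)
  also have "\<dots> = 2 * pi * c" by simp
  finally show ?thesis .
qed

lemma measure_PM [simp]: "measure PM {0..2*pi} = 2 * pi"
  using lint_const_real[of 1] by simp

lemma lint_cis: "(CLINT t|PM. cis (of_int j * t)) = (if j = 0 then 2 * pi else 0)"
proof (cases "j = 0")
  case True
  then show ?thesis using lint_const[of 1] by simp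
next
  case False
  have d: "((\<lambda>t. cis (of_int j * t)) has_vector_derivative (of_int j * \<i> * cis (of_int j * x))) (at x within {0..2*pi})" for x
    unfolding has_vector_derivative_def
    by (auto intro!: derivative_eq_intros simp: fun_eq_iff scaleR_conv_of_real algebra_simps)
  have "((\<lambda>x. of_int j * \<i> * cis (of_int j * x)) has_integral (cis (of_int j * (2*pi)) - cis (of_int j * 0))) {0..2*pi}"
    by (rule fundamental_theorem_of_calculus) (use d in auto)
  moreover have "cis (of_int j * (2*pi)) = 1"
    using cis_multiple_2pi[of "of_int j"] by (simp add: mult.commute)
  ultimately have "((\<lambda>x. of_int j * \<i> * cis (of_int j * x)) has_integral 0) {0..2*pi}" by simp
  then have "((\<lambda>x. of_int j * \<i> * cis (of_int j * x) * (1 / (of_int j * \<i>))) has_integral 0 * (1 / (of_int j * \<i>))) {0..2*pi}"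
    by (rule has_integral_mult_left)
  moreover have "of_int j * \<i> * cis (of_int j * x) * (1 / (of_int j * \<i>)) = cis (of_int j * x)" for x
    using False by (simp add: field_simps)
  ultimately have "((\<lambda>x. cis (of_int j * x)) has_integral 0) {0..2*pi}" by simp
  moreover have "(CLINT t|PM. cis (of_int j * t)) = integral {0..2*pi} (\<lambda>x. cis (of_int j * x))"
    by (rule lint_cont(2)) (intro continuous_intros)
  ultimately show ?thesis using False by (simp add: integral_unique)
qed

lemma lint_fourier:
  fixes a :: "nat \<Rightarrow> complex"
  assumes s: "summable (\<lambda>k. norm (a k))"
  shows "(CLINT t|PM. (\<Sum>k. a k * cis (real k * t)) * cis (of_int j * t))
         = 2 * pi * (if j \<le> 0 then a (nat (- j)) else 0)"
proof -
  define f where "f k t = a k * cis (of_int (int k + j) * t)" for k t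
  have eq: "(\<Sum>k. a k * cis (real k * t)) * cis (of_int j * t) = (\<Sum>k. f k t)" for t
  proof -
    have sk: "summable (\<lambda>k. a k * cis (real k * t))"
      by (rule summable_norm_cancel) (use s in \<open>simp add: norm_mult\<close>)
    have "(\<Sum>k. a k * cis (real k * t)) * cis (of_int j * t) = (\<Sum>k. a k * cis (real k * t) * cis (of_int j * t))"
      by (rule suminf_mult2[OF sk])
    also have "\<dots> = (\<Sum>k. f k t)"
      unfolding f_def by (simp add: mult.assoc cis_mult distrib_right)
    finally show ?thesis .
  qed
  have int: "integrable PM (f k)" for k
    unfolding f_def by (rule lint_cont(1)) (intro continuous_intros)
  have nf: "norm (f k t) = norm (a k)" for k t unfolding f_def by (simp add: norm_mult)
  have "(CLINT t|PM. (\<Sum>k. f k t)) = (\<Sum>k. CLINT t|PM. f k t)"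
  proof (rule integral_suminf[OF int])
    show "AE x in PM. summable (\<lambda>i. norm (f i x))" using s by (simp add: nf)
    show "summable (\<lambda>i. LINT x|PM. norm (f i x))"
      using s by (simp add: nf lint_const_real summable_mult)
  qed
  also have "(\<lambda>k. CLINT t|PM. f k t) = (\<lambda>k. if int k = - j then 2 * pi * a k else 0)"
  proof -
    have L: "(CLINT t|PM. cis ((real k + of_int j) * t)) = (if int k + j = 0 then 2*pi else 0)" for k
      using lint_cis[of "int k + j"] by simp
    show ?thesis unfolding f_def by (auto simp: fun_eq_iff L)
  qed
  also have "(\<Sum>k. if int k = - j then 2 * pi * a k else 0) = 2 * pi * (if j \<le> 0 then a (nat (- j)) else 0)"
  proof (cases "j \<le> 0")
    case True
    have "(\<lambda>k. if int k = - j then 2 * pi * a k else 0) = (\<lambda>k. if k = nat (- j) then 2 * pi * a k else 0)"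
      using True by (auto simp: fun_eq_iff)
    then show ?thesis using True sums_single[of "nat (-j)" "\<lambda>k. 2 * pi * a k"] by (simp add: sums_iff)
  next
    case False
    then have "(\<lambda>k. if int k = - j then 2 * pi * a k else 0) = (\<lambda>k. 0)" by (auto simp: fun_eq_iff)
    then show ?thesis using False by simp
  qed
  finally show ?thesis by (simp add: eq)
qed

lemma circle_in_ball: "0 \<le> r \<Longrightarrow> r < 1 \<Longrightarrow> complex_of_real r * cis t \<in> ball 0 1"
  by (simp add: norm_mult)

lemma cont_circle:
  assumes hol: "th holomorphic_on ball 0 1" and r: "0 \<le> r" "r < 1"
  shows "continuous_on A (\<lambda>t. th (complex_of_real r * cis t))"
proof (rule continuous_on_compose2[of "ball 0 1" th])
  show "continuous_on (ball 0 1) th" using hol by (rule holomorphic_on_imp_continuous_on)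
  show "continuous_on A (\<lambda>t. complex_of_real r * cis t)" by (intro continuous_intros)
  show "(\<lambda>t. complex_of_real r * cis t) ` A \<subseteq> ball 0 1" using circle_in_ball[OF r] by auto
qed

lemma circle_series:
  assumes hol: "th holomorphic_on ball 0 1" and r: "0 \<le> r" "r < 1"
  shows "(\<lambda>k. (taylor_coeff th k * complex_of_real r ^ k) * cis (real k * t)) sums th (complex_of_real r * cis t)"
proof -
  have "(\<lambda>n. (deriv ^^ n) th 0 / (fact n) * (complex_of_real r * cis t - 0)^n) sums th (complex_of_real r * cis t)"
    by (rule holomorphic_power_series[OF hol circle_in_ball[OF r]])
  moreover have "(complex_of_real r * cis t - 0) ^ n = complex_of_real r ^ n * cis (real n * t)" for n
    by (simp only: power_mult_distrib Complex.DeMoivre diff_zero)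
  ultimately show ?thesis
    by (simp add: taylor_coeff_def mult_ac)
qed

lemma circle_integral:
  fixes th :: "complex \<Rightarrow> complex"
  assumes hol: "th holomorphic_on ball 0 1" and bnd: "\<And>z. z \<in> ball 0 1 \<Longrightarrow> cmod (th z) \<le> B"
    and cb: "\<And>k. cmod (taylor_coeff th k) \<le> B"
    and r: "0 \<le> r" "r < 1"
  defines "a \<equiv> \<lambda>k. taylor_coeff th k * complex_of_real r ^ k"
  shows "integral\<^sup>L PM (\<lambda>t. complex_of_real ((cmod (th (complex_of_real r * cis t)))\<^sup>2) * cis (of_int (int d) * t))
         = 2 * pi * (\<Sum>k. a k * cnj (a (k + d)))"
proof -
  define T where "T t = th (complex_of_real r * cis t)" for t
  have B0: "0 \<le> B" using cb[of 0] by (meson norm_ge_zero order_trans)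
  have an: "norm (a k) \<le> B * r ^ k" for k
    unfolding a_def using cb[of k] r by (simp add: norm_mult norm_power mult_right_mono)
  have sa: "summable (\<lambda>k. norm (a k))"
    by (rule summable_comparison_test'[where g="\<lambda>k. B * r ^ k"]) (use an r in \<open>auto intro!: summable_mult summable_geometric\<close>)
  have Tser: "(\<lambda>k. a k * cis (real k * t)) sums T t" for t
    unfolding a_def T_def by (rule circle_series[OF hol r])
  have Tb: "norm (T t) \<le> B" for t unfolding T_def by (rule bnd[OF circle_in_ball[OF r]])
  have Tc: "continuous_on A T" for A unfolding T_def by (rule cont_circle[OF hol r])
  define f where "f l t = cnj (a l) * (T t * cis (of_int (int d - int l) * t))" for l t
  have eq: "complex_of_real ((cmod (T t))\<^sup>2) * cis (of_int (int d) * t) = (\<Sum>l. f l t)" for t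
  proof -
    have "(\<lambda>l. cnj (a l * cis (real l * t))) sums cnj (T t)"
      using Tser[of t] by (simp only: sums_cnj)
    then have "(\<lambda>l. (T t * cis (of_int (int d) * t)) * cnj (a l * cis (real l * t))) sums
               ((T t * cis (of_int (int d) * t)) * cnj (T t))"
      by (rule sums_mult)
    moreover have "(T t * cis (of_int (int d) * t)) * cnj (a l * cis (real l * t)) = f l t" for l
      unfolding f_def by (simp add: cis_cnj cis_mult algebra_simps)
    moreover have "(T t * cis (of_int (int d) * t)) * cnj (T t) = complex_of_real ((cmod (T t))\<^sup>2) * cis (of_int (int d) * t)"
    proof -
      have "(T t * cis (of_int (int d) * t)) * cnj (T t) = (T t * cnj (T t)) * cis (of_int (int d) * t)"
        by (simp add: mult_ac)
      also have "\<dots> = complex_of_real ((cmod (T t))\<^sup>2) * cis (of_int (int d) * t)"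
        by (simp only: complex_norm_square)
      finally show ?thesis .
    qed
    ultimately show ?thesis by (simp add: sums_iff)
  qed
  have int: "integrable PM (f l)" for l
    unfolding f_def by (rule lint_cont(1)) (intro continuous_intros Tc)
  have nf: "norm (f l t) \<le> norm (a l) * B" for l t
    unfolding f_def by (simp add: norm_mult) (intro mult_left_mono Tb, auto)
  have si: "summable (\<lambda>l. LINT t|PM. norm (f l t))"
  proof (rule summable_comparison_test'[where g="\<lambda>l. 2 * pi * (norm (a l) * B)"])
    show "summable (\<lambda>l. 2 * pi * (norm (a l) * B))" using sa by (intro summable_mult summable_mult2)
    fix l
    have i1: "integrable PM (\<lambda>t. norm (f l t))" by (rule integrable_norm[OF int])
    have i2: "integrable PM (\<lambda>t. norm (a l) * B)"
      by (rule continuous_imp_integrable_real) (rule continuous_on_const)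
    have "(LINT t|PM. norm (f l t)) \<le> (LINT t|PM. norm (a l) * B)"
      by (rule integral_mono[OF i1 i2 nf])
    also have "\<dots> = 2 * pi * (norm (a l) * B)" by (rule lint_const_real)
    moreover have "0 \<le> (LINT t|PM. norm (f l t))" by (rule Bochner_Integration.integral_nonneg) simp
    ultimately show "norm (LINT t|PM. norm (f l t)) \<le> 2 * pi * (norm (a l) * B)"
      by simp
  qed
  have AEs: "AE t in PM. summable (\<lambda>l. norm (f l t))"
  proof (rule AE_I2)
    fix t
    show "summable (\<lambda>l. norm (f l t))"
      by (rule summable_comparison_test'[OF summable_mult2[OF sa, of B]]) (simp add: nf)
  qed
  have "integral\<^sup>L PM (\<lambda>t. complex_of_real ((cmod (T t))\<^sup>2) * cis (of_int (int d) * t))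
        = integral\<^sup>L PM (\<lambda>t. \<Sum>l. f l t)"
    by (rule Bochner_Integration.integral_cong[OF refl eq])
  also have "\<dots> = (\<Sum>l. integral\<^sup>L PM (f l))"
    by (rule integral_suminf[OF int AEs si])
  also have "(\<lambda>l. integral\<^sup>L PM (f l)) = (\<lambda>l. if l < d then 0 else 2 * pi * (cnj (a l) * a (l - d)))"
  proof
    fix l
    have "integral\<^sup>L PM (f l) = cnj (a l) * integral\<^sup>L PM (\<lambda>t. (\<Sum>k. a k * cis (real k * t)) * cis (of_int (int d - int l) * t))"
      unfolding f_def using Tser by (simp add: sums_iff)
    also have "\<dots> = cnj (a l) * (2 * pi * (if int d - int l \<le> 0 then a (nat (- (int d - int l))) else 0))"
      by (subst lint_fourier[OF sa]) simp
    also have "\<dots> = (if l < d then 0 else 2 * pi * (cnj (a l) * a (l - d)))"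
      by (auto simp: nat_diff_distrib)
    finally show "integral\<^sup>L PM (f l) = (if l < d then 0 else 2 * pi * (cnj (a l) * a (l - d)))" .
  qed
  also have "(\<Sum>l. if l < d then 0 else 2 * pi * (cnj (a l) * a (l - d))) = (\<Sum>k. 2 * pi * (cnj (a (k + d)) * a k))"
  proof -
    have "(\<lambda>l. if l < d then 0 else 2 * pi * (cnj (a l) * a (l - d))) sums (\<Sum>l. if l < d then 0 else 2 * pi * (cnj (a l) * a (l - d)))"
      using summable_integral[OF int AEs si] unfolding \<open>(\<lambda>l. integral\<^sup>L PM (f l)) = _\<close>
      by (simp add: summable_sums)
    then have "(\<lambda>k. if k + d < d then 0 else 2 * pi * (cnj (a (k + d)) * a (k + d - d))) sums (\<Sum>l. if l < d then 0 else 2 * pi * (cnj (a l) * a (l - d)))"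
      by (subst sums_zero_iff_shift) auto
    then show ?thesis by (simp add: sums_iff)
  qed
  also have "\<dots> = 2 * pi * (\<Sum>k. a k * cnj (a (k + d)))"
  proof -
    have "summable (\<lambda>k. cnj (a (k + d)) * a k)"
    proof (rule summable_norm_cancel, rule summable_comparison_test'[where g="\<lambda>k. B * norm (a k)"])
      show "summable (\<lambda>k. B * norm (a k))" using sa by (rule summable_mult)
      fix k
      have "r ^ (k + d) \<le> 1" using r by (intro power_le_one) auto
      then have "B * r ^ (k + d) \<le> B" using B0 by (simp add: mult_left_le)
      then have "norm (a (k + d)) \<le> B" using an[of "k+d"] by linarith
      then show "norm (norm (cnj (a (k + d)) * a k)) \<le> B * norm (a k)"
        by (simp add: norm_mult mult_right_mono)
    qed
    then show ?thesis by (simp add: suminf_mult mult.commute)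
  qed
  finally show ?thesis unfolding T_def .
qed


definition rseq :: "nat \<Rightarrow> real" where "rseq m = 1 - 1 / (real m + 2)"

lemma rseq_props: "0 \<le> rseq m" "rseq m < 1" "rseq \<longlonglongrightarrow> 1" "filterlim rseq (at_left 1) sequentially"
proof -
  show "0 \<le> rseq m" "rseq m < 1" unfolding rseq_def by (auto simp: field_simps)
  have "(\<lambda>m. 1 - 1 / (real m + 2)) \<longlonglongrightarrow> 1 - 0"
    by (intro tendsto_intros tendsto_divide_0[OF tendsto_const]) real_asymp
  then show l: "rseq \<longlonglongrightarrow> 1" unfolding rseq_def by simp
  show "filterlim rseq (at_left 1) sequentially"
    by (rule tendsto_imp_filterlim_at_left[OF l]) (auto simp: rseq_def field_simps)
qed

lemma coeff_bound:
  assumes hol: "th holomorphic_on ball 0 1" and bnd: "\<And>z. z \<in> ball 0 1 \<Longrightarrow> cmod (th z) \<le> B"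
  shows "cmod (taylor_coeff th k) \<le> B"
proof -
  have le: "cmod (taylor_coeff th k) * s ^ k \<le> B" if s: "0 < s" "s < 1" for s
  proof -
    have "norm ((deriv ^^ k) th 0) \<le> (fact k) * B / s ^ k"
    proof (rule Cauchy_inequality)
      show "th holomorphic_on ball 0 s" using hol by (rule holomorphic_on_subset) (use s in auto)
      show "continuous_on (cball 0 s) th"
        using holomorphic_on_imp_continuous_on[OF hol] by (rule continuous_on_subset) (use s in auto)
      show "0 < s" by fact
      show "norm (th x) \<le> B" if "norm (0 - x) = s" for x using that s by (intro bnd) auto
    qed
    then show ?thesis using s unfolding taylor_coeff_def
      by (simp add: norm_divide field_simps)
  qed
  have "(\<lambda>m. cmod (taylor_coeff th k) * rseq m ^ k) \<longlonglongrightarrow> cmod (taylor_coeff th k) * 1 ^ k"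
    by (intro tendsto_intros rseq_props)
  then have "(\<lambda>m. cmod (taylor_coeff th k) * rseq m ^ k) \<longlonglongrightarrow> cmod (taylor_coeff th k)" by simp
  then show ?thesis
  proof (rule LIMSEQ_le_const2)
    show "\<exists>N. \<forall>n\<ge>N. cmod (taylor_coeff th k) * rseq n ^ k \<le> B"
      by (intro exI allI impI le) (auto simp: rseq_def field_simps)
  qed
qed

lemma inner_basic:
  assumes "inner_function th"
  obtains B where "th holomorphic_on ball 0 1" "\<And>z. z \<in> ball 0 1 \<Longrightarrow> cmod (th z) \<le> B"
    "AE t in PM. \<exists>L. ((\<lambda>r::real. th (complex_of_real r * cis t)) \<longlongrightarrow> L) (at_left 1) \<and> cmod L = 1"
  using assms unfolding inner_function_def Hinf_def by blast

lemma S_eq: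
  fixes c :: "nat \<Rightarrow> complex"
  shows "(c k * complex_of_real r ^ k) * cnj (c (k + d) * complex_of_real r ^ (k + d))
       = c k * cnj (c (k + d)) * complex_of_real (r ^ k * r ^ (k + d))"
  by (simp add: mult_ac)

lemma inner_l2:
  assumes inn: "inner_function th"
  shows "l2 (taylor_coeff th)"
proof -
  obtain B where hol: "th holomorphic_on ball 0 1" and bnd: "\<And>z. z \<in> ball 0 1 \<Longrightarrow> cmod (th z) \<le> B"
    using inner_basic[OF inn] by blast
  define c where "c = taylor_coeff th"
  have cb: "\<And>k. cmod (taylor_coeff th k) \<le> B" by (rule coeff_bound[OF hol bnd])
  have B0: "0 \<le> B" using cb[of 0] by (meson norm_ge_zero order_trans)
  have part: "(\<Sum>k<N. (cmod (c k) * r ^ k)\<^sup>2) \<le> B\<^sup>2" if r: "0 \<le> r" "r < 1" for N r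
  proof -
    define a where "a k = c k * complex_of_real r ^ k" for k
    have ci: "integral\<^sup>L PM (\<lambda>t. complex_of_real ((cmod (th (complex_of_real r * cis t)))\<^sup>2) * cis (of_int (int 0) * t))
         = 2 * pi * (\<Sum>k. a k * cnj (a (k + 0)))"
      unfolding a_def c_def by (rule circle_integral[OF hol bnd cb r])
    have aa: "a k * cnj (a k) = complex_of_real ((cmod (c k) * r ^ k)\<^sup>2)" for k
    proof -
      have "a k * cnj (a k) = complex_of_real ((cmod (a k))\<^sup>2)" by (simp only: complex_norm_square)
      moreover have "cmod (a k) = cmod (c k) * r ^ k"
        unfolding a_def using r by (simp add: norm_mult norm_power)
      ultimately show ?thesis by simp
    qed
    have sa: "summable (\<lambda>k. (cmod (c k) * r ^ k)\<^sup>2)"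
    proof (rule summable_comparison_test'[where g="\<lambda>k. B\<^sup>2 * (r\<^sup>2) ^ k"])
      show "summable (\<lambda>k. B\<^sup>2 * (r\<^sup>2) ^ k)" using r
        by (intro summable_mult summable_geometric) (auto simp: abs_square_less_1)
      fix k
      have "(cmod (c k))\<^sup>2 \<le> B\<^sup>2" unfolding c_def by (intro power_mono cb) auto
      moreover have "(cmod (c k) * r ^ k)\<^sup>2 = (cmod (c k))\<^sup>2 * (r\<^sup>2) ^ k"
        by (simp add: power_mult_distrib power_mult[symmetric] mult.commute)
      ultimately show "norm ((cmod (c k) * r ^ k)\<^sup>2) \<le> B\<^sup>2 * (r\<^sup>2) ^ k"
        using r by (simp add: mult_right_mono)
    qed
    have int1: "integral\<^sup>L PM (\<lambda>t. complex_of_real ((cmod (th (complex_of_real r * cis t)))\<^sup>2))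
              = complex_of_real (2 * pi * (\<Sum>k. (cmod (c k) * r ^ k)\<^sup>2))"
      using ci by (simp add: aa suminf_of_real[OF sa])
    have "complex_of_real (LINT t|PM. (cmod (th (complex_of_real r * cis t)))\<^sup>2)
          = integral\<^sup>L PM (\<lambda>t. complex_of_real ((cmod (th (complex_of_real r * cis t)))\<^sup>2))"
      by (rule integral_complex_of_real[symmetric])
    also have "\<dots> = complex_of_real (2 * pi * (\<Sum>k. (cmod (c k) * r ^ k)\<^sup>2))" by (rule int1)
    finally have "(LINT t|PM. (cmod (th (complex_of_real r * cis t)))\<^sup>2) = 2 * pi * (\<Sum>k. (cmod (c k) * r ^ k)\<^sup>2)"
      by (simp only: of_real_eq_iff)
    moreover have "(LINT t|PM. (cmod (th (complex_of_real r * cis t)))\<^sup>2) \<le> (LINT t|PM. B\<^sup>2)"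
    proof (rule integral_mono)
      show "integrable PM (\<lambda>t. (cmod (th (complex_of_real r * cis t)))\<^sup>2)"
        by (rule continuous_imp_integrable_real) (intro continuous_intros cont_circle[OF hol r])
      show "integrable PM (\<lambda>t. B\<^sup>2)"
        by (rule continuous_imp_integrable_real) (rule continuous_on_const)
      show "(cmod (th (complex_of_real r * cis t)))\<^sup>2 \<le> B\<^sup>2" for t
        using bnd[OF circle_in_ball[OF r]] by (intro power_mono) auto
    qed
    ultimately have "(\<Sum>k. (cmod (c k) * r ^ k)\<^sup>2) \<le> B\<^sup>2"
      by (simp add: lint_const_real)
    moreover have "(\<Sum>k<N. (cmod (c k) * r ^ k)\<^sup>2) \<le> (\<Sum>k. (cmod (c k) * r ^ k)\<^sup>2)"
      by (rule sum_le_suminf[OF sa]) (use r in auto)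
    ultimately show ?thesis by linarith
  qed
  have "(\<Sum>k<N. (cmod (c k))\<^sup>2) \<le> B\<^sup>2" for N
  proof (rule LIMSEQ_le_const2)
    have "(\<lambda>m. \<Sum>k<N. (cmod (c k) * rseq m ^ k)\<^sup>2) \<longlonglongrightarrow> (\<Sum>k<N. (cmod (c k) * 1 ^ k)\<^sup>2)"
      by (intro tendsto_intros rseq_props)
    then show "(\<lambda>m. \<Sum>k<N. (cmod (c k) * rseq m ^ k)\<^sup>2) \<longlonglongrightarrow> (\<Sum>k<N. (cmod (c k))\<^sup>2)"
      by simp
    show "\<exists>N0. \<forall>m\<ge>N0. (\<Sum>k<N. (cmod (c k) * rseq m ^ k)\<^sup>2) \<le> B\<^sup>2"
      using part rseq_props by blast
  qed
  then show ?thesis using nsq_le_partial(1) unfolding c_def by blast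
qed

lemma inner_autocorr:
  assumes inn: "inner_function th"
  shows "(\<Sum>k. taylor_coeff th k * cnj (taylor_coeff th (k + d))) = (if d = 0 then 1 else 0)"
proof -
  obtain B where hol: "th holomorphic_on ball 0 1" and bnd: "\<And>z. z \<in> ball 0 1 \<Longrightarrow> cmod (th z) \<le> B"
    and AEL: "AE t in PM. \<exists>L. ((\<lambda>r::real. th (complex_of_real r * cis t)) \<longlongrightarrow> L) (at_left 1) \<and> cmod L = 1"
    using inner_basic[OF inn] by blast
  define c where "c = taylor_coeff th"
  have cb: "\<And>k. cmod (taylor_coeff th k) \<le> B" by (rule coeff_bound[OF hol bnd])
  have l2c: "l2 c" unfolding c_def by (rule inner_l2[OF inn])
  have l2s: "l2 (\<lambda>k. c (k + d))"
    using l2c unfolding l2_def by (rule summable_ignore_initial_segment)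
  define I where "I m = integral\<^sup>L PM (\<lambda>t. complex_of_real ((cmod (th (complex_of_real (rseq m) * cis t)))\<^sup>2) * cis (of_int (int d) * t))" for m
  define R where "R m = (\<Sum>k. c k * cnj (c (k + d)) * complex_of_real (rseq m ^ k * rseq m ^ (k + d)))" for m
  have IR: "I m = 2 * pi * R m" for m
    unfolding I_def R_def c_def
    using circle_integral[OF hol bnd cb rseq_props(1) rseq_props(2), of m d] by (simp only: S_eq)
  have limI: "I \<longlonglongrightarrow> integral\<^sup>L PM (\<lambda>t. cis (of_int (int d) * t))"
    unfolding I_def
  proof (rule integral_dominated_convergence[where w="\<lambda>t. B\<^sup>2"])
    show "(\<lambda>t. cis (of_int (int d) * t)) \<in> borel_measurable PM"
      by (rule borel_measurable_integrable, rule lint_cont(1)) (intro continuous_intros)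
    show "(\<lambda>t. complex_of_real ((cmod (th (complex_of_real (rseq m) * cis t)))\<^sup>2) * cis (of_int (int d) * t)) \<in> borel_measurable PM" for m
      by (rule borel_measurable_integrable, rule lint_cont(1))
         (intro continuous_intros cont_circle[OF hol rseq_props(1) rseq_props(2)])
    show "integrable PM (\<lambda>t. B\<^sup>2)"
      by (rule continuous_imp_integrable_real) (rule continuous_on_const)
    show "AE t in PM. norm (complex_of_real ((cmod (th (complex_of_real (rseq m) * cis t)))\<^sup>2) * cis (of_int (int d) * t)) \<le> B\<^sup>2" for m
    proof (rule AE_I2)
      fix t
      have "cmod (th (complex_of_real (rseq m) * cis t)) \<le> B"
        by (rule bnd[OF circle_in_ball[OF rseq_props(1) rseq_props(2)]])
      then have "(cmod (th (complex_of_real (rseq m) * cis t)))\<^sup>2 \<le> B\<^sup>2" by (intro power_mono) auto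
      then show "norm (complex_of_real ((cmod (th (complex_of_real (rseq m) * cis t)))\<^sup>2) * cis (of_int (int d) * t)) \<le> B\<^sup>2"
        by (simp add: norm_mult norm_power)
    qed
    show "AE t in PM. (\<lambda>m. complex_of_real ((cmod (th (complex_of_real (rseq m) * cis t)))\<^sup>2) * cis (of_int (int d) * t))
            \<longlonglongrightarrow> cis (of_int (int d) * t)"
      using AEL
    proof (rule AE_mp, intro AE_I2 impI)
      fix t assume "\<exists>L. ((\<lambda>r::real. th (complex_of_real r * cis t)) \<longlongrightarrow> L) (at_left 1) \<and> cmod L = 1"
      then obtain L where L: "((\<lambda>r::real. th (complex_of_real r * cis t)) \<longlongrightarrow> L) (at_left 1)" "cmod L = 1" by blast
      have "(\<lambda>m. th (complex_of_real (rseq m) * cis t)) \<longlonglongrightarrow> L"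
        by (rule filterlim_compose[OF L(1) rseq_props(4)])
      then have "(\<lambda>m. complex_of_real ((cmod (th (complex_of_real (rseq m) * cis t)))\<^sup>2) * cis (of_int (int d) * t))
            \<longlonglongrightarrow> complex_of_real ((cmod L)\<^sup>2) * cis (of_int (int d) * t)"
        by (intro tendsto_intros)
      then show "(\<lambda>m. complex_of_real ((cmod (th (complex_of_real (rseq m) * cis t)))\<^sup>2) * cis (of_int (int d) * t))
            \<longlonglongrightarrow> cis (of_int (int d) * t)" using L(2) by simp
    qed
  qed
  have Ival: "integral\<^sup>L PM (\<lambda>t. cis (of_int (int d) * t)) = (if d = 0 then 2 * pi else 0)"
    using lint_cis[of "int d"] by simp
  define w where "w k = cmod (c k) * cmod (c (k + d))" for k
  define sq where "sq m k = c k * cnj (c (k + d)) * complex_of_real (rseq m ^ k * rseq m ^ (k + d))" for m k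
  have wint: "integrable (count_space UNIV) w"
    unfolding integrable_count_space_nat_iff w_def using l2_summable_prod[OF l2c l2s] by simp
  have rb: "rseq m ^ k * rseq m ^ (k + d) \<le> 1" for m k
    using rseq_props(1,2)[of m] by (intro mult_le_one power_le_one) auto
  have sqb: "AE k in count_space UNIV. norm (sq m k) \<le> w k" for m
  proof (rule AE_I2)
    fix k
    have "norm (sq m k) = w k * (rseq m ^ k * rseq m ^ (k + d))"
      unfolding sq_def w_def using rseq_props(1)[of m] by (simp add: norm_mult norm_power)
    also have "\<dots> \<le> w k * 1" unfolding w_def by (intro mult_left_mono rb) auto
    finally show "norm (sq m k) \<le> w k" by simp
  qed
  have sqlim: "AE k in count_space UNIV. (\<lambda>m. sq m k) \<longlonglongrightarrow> c k * cnj (c (k + d))"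
  proof (rule AE_I2)
    fix k
    have "(\<lambda>m. sq m k) \<longlonglongrightarrow> c k * cnj (c (k + d)) * complex_of_real (1 ^ k * 1 ^ (k + d))"
      unfolding sq_def by (intro tendsto_intros rseq_props)
    then show "(\<lambda>m. sq m k) \<longlonglongrightarrow> c k * cnj (c (k + d))" by simp
  qed
  have meas1: "(\<lambda>k. c k * cnj (c (k + d))) \<in> borel_measurable (count_space UNIV)" by simp
  have meas2: "sq m \<in> borel_measurable (count_space UNIV)" for m by simp
  have limsq: "(\<lambda>m. integral\<^sup>L (count_space UNIV) (sq m)) \<longlonglongrightarrow> integral\<^sup>L (count_space UNIV) (\<lambda>k. c k * cnj (c (k + d)))"
    by (rule integral_dominated_convergence[OF meas1 meas2 wint sqlim sqb])
  have i1: "integrable (count_space UNIV) (\<lambda>k. c k * cnj (c (k + d)))"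
    by (rule integrable_dominated_convergence[OF meas1 meas2 wint sqlim sqb])
  have i2: "integrable (count_space UNIV) (sq m)" for m
    by (rule integrable_dominated_convergence2[OF meas1 meas2 wint sqlim sqb])
  have "R = (\<lambda>m. integral\<^sup>L (count_space UNIV) (sq m))"
    unfolding R_def sq_def using integral_count_space_nat[OF i2] unfolding sq_def by (simp add: fun_eq_iff)
  then have limR: "R \<longlonglongrightarrow> (\<Sum>k. c k * cnj (c (k + d)))"
    using limsq integral_count_space_nat[OF i1] by simp
  have "(\<lambda>m. 2 * pi * R m) \<longlonglongrightarrow> 2 * pi * (\<Sum>k. c k * cnj (c (k + d)))"
    by (intro tendsto_intros limR)
  moreover have "(\<lambda>m. 2 * pi * R m) \<longlonglongrightarrow> (if d = 0 then 2 * pi else 0)"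
    using limI unfolding Ival IR[symmetric] by (simp add: fun_eq_iff)
  ultimately have "2 * pi * (\<Sum>k. c k * cnj (c (k + d))) = (if d = 0 then 2 * pi else 0)"
    by (rule LIMSEQ_unique)
  then show ?thesis unfolding c_def by (auto split: if_splits)
qed


definition Tm :: "(nat \<Rightarrow> complex) \<Rightarrow> (nat \<Rightarrow> complex) \<Rightarrow> nat \<Rightarrow> complex" where
  "Tm c a n = (\<Sum>i=0..n. a i * c (n - i))"

definition sh :: "(nat \<Rightarrow> complex) \<Rightarrow> nat \<Rightarrow> nat \<Rightarrow> complex" where
  "sh c i k = (if i \<le> k then c (k - i) else 0)"

definition tr :: "nat \<Rightarrow> (nat \<Rightarrow> complex) \<Rightarrow> nat \<Rightarrow> complex" where
  "tr M a k = (if k < M then a k else 0)"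

lemma ip_fin:
  assumes "\<And>k. k \<ge> N \<Longrightarrow> a k = 0"
  shows "ip a b = (\<Sum>k<N. a k * cnj (b k))"
  unfolding ip_def by (rule suminf_finite) (use assms in auto)

lemma nsq_fin:
  assumes "\<And>k. k \<ge> N \<Longrightarrow> a k = 0"
  shows "nsq a = (\<Sum>k<N. (cmod (a k))\<^sup>2)"
  unfolding nsq_def by (rule suminf_finite) (use assms in auto)

lemma Tm_diff: "Tm c (\<lambda>i. x i - y i) k = Tm c x k - Tm c y k"
  unfolding Tm_def by (simp add: left_diff_distrib sum_subtractf)

lemma supp_lt:
  fixes N :: nat and a :: "nat \<Rightarrow> complex"
  assumes "\<And>k. k \<ge> N \<Longrightarrow> a k = 0" "a i \<noteq> 0"
  shows "i < N"
proof (rule ccontr)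
  assume "\<not> i < N"
  then have "a i = 0" using assms(1)[of i] by simp
  with assms(2) show False by simp
qed

lemma Tm_fin:
  assumes "\<And>k. k \<ge> N \<Longrightarrow> a k = 0"
  shows "Tm c a k = (\<Sum>i<N. a i * sh c i k)"
proof -
  have "Tm c a k = (\<Sum>i\<in>{0..k} \<inter> {..<N}. a i * c (k - i))"
    unfolding Tm_def by (rule sum.mono_neutral_right) (use supp_lt[of N a] assms in auto)
  also have "\<dots> = (\<Sum>i<N. a i * sh c i k)"
    by (rule sum.mono_neutral_cong_left) (auto simp: sh_def)
  finally show ?thesis .
qed

lemma coeff_conv:
  assumes "\<And>N. l2 (x N)" "l2 z" "(\<lambda>N. nsq (\<lambda>k. x N k - z k)) \<longlonglongrightarrow> 0"
  shows "(\<lambda>N. x N k) \<longlonglongrightarrow> z k"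
proof -
  have "(\<lambda>N. sqrt (nsq (\<lambda>k. x N k - z k))) \<longlonglongrightarrow> sqrt 0" by (intro tendsto_intros assms)
  moreover have "norm (x N k - z k) \<le> sqrt (nsq (\<lambda>k. x N k - z k))" for N
    using l2_bounded[OF l2_diff[OF assms(1) assms(2)], of N k] by simp
  ultimately have "(\<lambda>N. x N k - z k) \<longlonglongrightarrow> 0"
    using Lim_null_comparison[of "\<lambda>N. x N k - z k" "\<lambda>N. sqrt (nsq (\<lambda>k. x N k - z k))" sequentially]
    by (auto intro: always_eventually)
  then show ?thesis by (simp add: LIM_zero_iff)
qed

lemma tr_conv:
  assumes "l2 a"
  shows "(\<lambda>M. nsq (\<lambda>k. tr M a k - a k)) \<longlonglongrightarrow> 0"
proof -
  have "nsq (\<lambda>k. tr M a k - a k) = (\<Sum>k. (cmod (a (k + M)))\<^sup>2)" for M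
  proof -
    have "(\<lambda>k. (cmod (tr M a (k + M) - a (k + M)))\<^sup>2) sums nsq (\<lambda>k. tr M a k - a k)
           \<longleftrightarrow> (\<lambda>k. (cmod (tr M a k - a k))\<^sup>2) sums nsq (\<lambda>k. tr M a k - a k)"
      by (rule sums_zero_iff_shift) (simp add: tr_def)
    moreover have "(\<lambda>k. (cmod (tr M a k - a k))\<^sup>2) sums nsq (\<lambda>k. tr M a k - a k)"
    proof -
      have "l2 (tr M a)" by (rule l2_finite_support[of M]) (simp add: tr_def)
      then show ?thesis by (intro nsq_sums l2_diff assms)
    qed
    ultimately show ?thesis by (simp add: tr_def sums_iff)
  qed
  moreover have "(\<lambda>M. \<Sum>k. (cmod (a (k + M)))\<^sup>2) \<longlonglongrightarrow> 0"
    using assms unfolding l2_def by (rule suminf_exist_split2)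
  ultimately show ?thesis by simp
qed

locale toep =
  fixes c :: "nat \<Rightarrow> complex"
  assumes l2c: "l2 c"
    and autoc: "\<And>d. (\<Sum>k. c k * cnj (c (k + d))) = (if d = 0 then 1 else 0)"
begin

lemma l2_sh: "l2 (sh c i)"
proof -
  have "(\<lambda>k. (cmod (sh c i (k + i)))\<^sup>2) sums nsq c \<longleftrightarrow> (\<lambda>k. (cmod (sh c i k))\<^sup>2) sums nsq c"
    by (rule sums_zero_iff_shift) (simp add: sh_def)
  moreover have "(\<lambda>k. (cmod (sh c i (k + i)))\<^sup>2) sums nsq c"
    using nsq_sums[OF l2c] by (simp add: sh_def)
  ultimately show ?thesis unfolding l2_def by (auto simp: sums_iff)
qed

lemma ip_sh_le:
  assumes "i \<le> j"
  shows "ip (sh c i) (sh c j) = (if i = j then 1 else 0)"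
proof -
  define e where "e = j - i"
  have s: "summable (\<lambda>l. c l * cnj (c (l + e)))"
    using l2c l2c[unfolded l2_def, THEN summable_ignore_initial_segment, of e]
    by (intro l2_ip_summable) (auto simp: l2_def)
  have "(\<lambda>k. sh c i (k + j) * cnj (sh c j (k + j))) sums ip (sh c i) (sh c j)
        \<longleftrightarrow> (\<lambda>k. sh c i k * cnj (sh c j k)) sums ip (sh c i) (sh c j)"
    by (rule sums_zero_iff_shift) (simp add: sh_def)
  moreover have "(\<lambda>k. sh c i k * cnj (sh c j k)) sums ip (sh c i) (sh c j)"
    by (rule ip_sums[OF l2_sh l2_sh])
  ultimately have "(\<lambda>k. c (k + e) * cnj (c k)) sums ip (sh c i) (sh c j)"
    using assms by (simp add: sh_def e_def add.commute)
  then have "ip (sh c i) (sh c j) = (\<Sum>k. c (k + e) * cnj (c k))" by (simp add: sums_iff)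
  also have "\<dots> = cnj (\<Sum>k. c k * cnj (c (k + e)))"
    by (subst suminf_cnj[OF s]) (simp add: mult.commute)
  also have "\<dots> = cnj (if e = 0 then 1 else 0)" by (simp only: autoc)
  also have "\<dots> = (if i = j then 1 else 0)"
    using assms by (simp add: e_def)
  finally show ?thesis .
qed

lemma ip_sh: "ip (sh c i) (sh c j) = (if i = j then 1 else 0)"
proof (cases "i \<le> j")
  case True then show ?thesis by (rule ip_sh_le)
next
  case False
  then have "ip (sh c i) (sh c j) = cnj (ip (sh c j) (sh c i))" by (intro ip_cnj l2_sh)
  also have "\<dots> = 0" using False by (simp add: ip_sh_le)
  finally show ?thesis using False by simp
qed

lemma l2_Tm_fin:
  assumes "\<And>k. k \<ge> N \<Longrightarrow> a k = 0"
  shows "l2 (Tm c a)"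
proof -
  have "l2 (\<lambda>k. \<Sum>i<N. a i * sh c i k)" by (intro l2_sum l2_scale l2_sh) auto
  moreover have "Tm c a = (\<lambda>k. \<Sum>i<N. a i * sh c i k)"
    by (intro ext Tm_fin) (use assms in auto)
  ultimately show ?thesis by simp
qed

lemma ip_Tm_fin:
  assumes a: "\<And>k. k \<ge> N \<Longrightarrow> a k = 0" and b: "\<And>k. k \<ge> N \<Longrightarrow> b k = 0"
  shows "ip (Tm c a) (Tm c b) = ip a b"
proof -
  have TA: "Tm c a = (\<lambda>k. \<Sum>i<N. a i * sh c i k)" using Tm_fin[OF a] by (simp add: fun_eq_iff)
  have TB: "Tm c b = (\<lambda>k. \<Sum>j<N. b j * sh c j k)" using Tm_fin[OF b] by (simp add: fun_eq_iff)
  have lb: "l2 (\<lambda>k. \<Sum>j<N. b j * sh c j k)" by (intro l2_sum l2_scale l2_sh) auto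
  have "ip (Tm c a) (Tm c b) = (\<Sum>i<N. ip (\<lambda>k. a i * sh c i k) (\<lambda>k. \<Sum>j<N. b j * sh c j k))"
    unfolding TA TB by (rule ip_sum_left) (auto intro: l2_scale l2_sh lb)
  also have "\<dots> = (\<Sum>i<N. a i * cnj (b i))"
  proof (rule sum.cong[OF refl])
    fix i assume i: "i \<in> {..<N}"
    have "ip (\<lambda>k. a i * sh c i k) (\<lambda>k. \<Sum>j<N. b j * sh c j k) = a i * ip (sh c i) (\<lambda>k. \<Sum>j<N. b j * sh c j k)"
      by (rule ip_scale_left[OF l2_sh lb])
    also have "ip (sh c i) (\<lambda>k. \<Sum>j<N. b j * sh c j k) = cnj (ip (\<lambda>k. \<Sum>j<N. b j * sh c j k) (sh c i))"
      by (rule ip_cnj[OF lb l2_sh])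
    also have "ip (\<lambda>k. \<Sum>j<N. b j * sh c j k) (sh c i) = (\<Sum>j<N. ip (\<lambda>k. b j * sh c j k) (sh c i))"
      by (rule ip_sum_left) (auto intro: l2_scale l2_sh)
    also have "\<dots> = (\<Sum>j<N. b j * (if j = i then 1 else 0))"
      by (rule sum.cong[OF refl]) (simp add: ip_scale_left[OF l2_sh l2_sh] ip_sh)
    also have "\<dots> = b i" using i by (simp add: if_distrib cong: if_cong)
    finally show "ip (\<lambda>k. a i * sh c i k) (\<lambda>k. \<Sum>j<N. b j * sh c j k) = a i * cnj (b i)" .
  qed
  also have "\<dots> = ip a b" by (rule ip_fin[symmetric, OF a])
  finally show ?thesis .
qed

lemma l2_tr: "l2 (tr M a)"
  by (rule l2_finite_support[of M]) (simp add: tr_def)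

lemma Tm_tr_eq: "M > k \<Longrightarrow> Tm c (tr M a) k = Tm c a k"
  unfolding Tm_def tr_def by (intro sum.cong) auto

lemma nsq_Tm_fin:
  assumes "\<And>k. k \<ge> N \<Longrightarrow> a k = 0"
  shows "nsq (Tm c a) = nsq a"
proof -
  have "of_real (nsq (Tm c a)) = (of_real (nsq a) :: complex)"
    using ip_Tm_fin[of N a a, OF assms assms] ip_self[OF l2_Tm_fin[of N a, OF assms]]
      ip_self[OF l2_finite_support[of N a, OF assms]]
    by simp
  then show ?thesis by (simp only: of_real_eq_iff)
qed

lemma l2_Tm_tr: "l2 (Tm c (tr M a))"
  by (rule l2_Tm_fin[of M]) (simp add: tr_def)

lemma T_conv:
  assumes a: "l2 a"
  shows "l2 (Tm c a)" "(\<lambda>M. nsq (\<lambda>k. Tm c (tr M a) k - Tm c a k)) \<longlonglongrightarrow> 0"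
proof -
  define x where "x M = Tm c (tr M a)" for M
  have lx: "l2 (x M)" for M unfolding x_def by (rule l2_Tm_fin[of M]) (simp add: tr_def)
  have dx: "nsq (\<lambda>k. x M k - x M' k) = nsq (\<lambda>k. tr M a k - tr M' a k)" for M M'
  proof -
    have "(\<lambda>k. x M k - x M' k) = Tm c (\<lambda>i. tr M a i - tr M' a i)"
      unfolding x_def by (simp add: Tm_diff fun_eq_iff)
    moreover have "nsq (Tm c (\<lambda>i. tr M a i - tr M' a i)) = nsq (\<lambda>i. tr M a i - tr M' a i)"
      by (rule nsq_Tm_fin[of "max M M'"]) (simp add: tr_def)
    ultimately show ?thesis by simp
  qed
  have tc: "(\<lambda>M. nsq (\<lambda>k. tr M a k - a k)) \<longlonglongrightarrow> 0" by (rule tr_conv[OF a])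
  have C: "\<exists>M0. \<forall>N\<ge>M0. \<forall>N'\<ge>M0. nsq (\<lambda>k. x N k - x N' k) < e" if e: "e > 0" for e
  proof -
    obtain M0 where M0: "\<forall>N\<ge>M0. norm (nsq (\<lambda>k. tr N a k - a k) - 0) < e / 4"
      using LIMSEQ_D[OF tc, of "e/4"] e by auto
    show ?thesis
    proof (intro exI allI impI)
      fix N N' assume "N \<ge> M0" "N' \<ge> M0"
      then have n1: "nsq (\<lambda>k. tr N a k - a k) < e/4" and n2: "nsq (\<lambda>k. tr N' a k - a k) < e/4"
        using M0 by auto
      have "nsq (\<lambda>k. (tr N a k - a k) - (tr N' a k - a k)) \<le> 2 * nsq (\<lambda>k. tr N a k - a k) + 2 * nsq (\<lambda>k. tr N' a k - a k)"
        by (rule nsq_diff_le) (auto intro: l2_diff l2_tr a)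
      then show "nsq (\<lambda>k. x N k - x N' k) < e" unfolding dx using n1 n2 by simp
    qed
  qed
  obtain z where lz: "l2 z" and zc: "(\<lambda>N. nsq (\<lambda>k. x N k - z k)) \<longlonglongrightarrow> 0"
    using l2_complete[OF lx C] by blast
  have "z = Tm c a"
  proof
    fix k
    have "(\<lambda>N. x N k) \<longlonglongrightarrow> z k" by (rule coeff_conv[OF lx lz zc])
    moreover have "(\<lambda>N. x N k) \<longlonglongrightarrow> Tm c a k"
    proof (rule Lim_transform_eventually[OF tendsto_const])
      show "\<forall>\<^sub>F N in sequentially. Tm c a k = x N k"
        unfolding x_def eventually_sequentially by (rule exI[of _ "Suc k"]) (auto simp: Tm_tr_eq)
    qed
    ultimately show "z k = Tm c a k" by (rule LIMSEQ_unique)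
  qed
  then show "l2 (Tm c a)" "(\<lambda>M. nsq (\<lambda>k. Tm c (tr M a) k - Tm c a k)) \<longlonglongrightarrow> 0"
    using lz zc unfolding x_def by auto
qed

lemma nsq_Tm:
  assumes a: "l2 a"
  shows "nsq (Tm c a) = nsq a"
proof -
  have "(\<lambda>M. nsq (Tm c (tr M a))) \<longlonglongrightarrow> nsq (Tm c a)"
    by (rule nsq_continuous[OF l2_Tm_tr T_conv(1)[OF a] T_conv(2)[OF a]])
  moreover have "(\<lambda>M. nsq (Tm c (tr M a))) \<longlonglongrightarrow> nsq a"
  proof -
    have "(\<lambda>M. nsq (tr M a)) \<longlonglongrightarrow> nsq a"
      by (rule nsq_continuous[OF l2_tr a tr_conv[OF a]])
    moreover have "nsq (Tm c (tr M a)) = nsq (tr M a)" for M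
      by (rule nsq_Tm_fin[of M]) (simp add: tr_def)
    ultimately show ?thesis by simp
  qed
  ultimately show ?thesis by (rule LIMSEQ_unique)
qed

lemma ip_continuous_right:
  assumes "\<And>N. l2 (x N)" "l2 z" "l2 g"
    and lim: "(\<lambda>N. nsq (\<lambda>k. x N k - z k)) \<longlonglongrightarrow> 0"
  shows "(\<lambda>N. ip g (x N)) \<longlonglongrightarrow> ip g z"
proof -
  have "(\<lambda>N. cnj (ip (x N) g)) \<longlonglongrightarrow> cnj (ip z g)"
    by (intro tendsto_intros ip_continuous[OF assms])
  moreover have "ip g (x N) = cnj (ip (x N) g)" for N by (rule ip_cnj[OF assms(1) assms(3)])
  moreover have "ip g z = cnj (ip z g)" by (rule ip_cnj[OF assms(2) assms(3)])
  ultimately show ?thesis by simp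
qed

lemma ip_Tm_mixed:
  assumes u: "\<And>k. k \<ge> N \<Longrightarrow> u k = 0" and h: "l2 h"
  shows "ip (Tm c u) (Tm c h) = ip u h"
proof -
  have lu: "l2 u" by (rule l2_finite_support[OF u])
  have lTu: "l2 (Tm c u)" by (rule l2_Tm_fin[OF u])
  have "(\<lambda>M. ip (Tm c u) (Tm c (tr M h))) \<longlonglongrightarrow> ip (Tm c u) (Tm c h)"
    by (rule ip_continuous_right[OF l2_Tm_tr T_conv(1)[OF h] lTu T_conv(2)[OF h]])
  moreover have "(\<lambda>M. ip (Tm c u) (Tm c (tr M h))) \<longlonglongrightarrow> ip u h"
  proof (rule Lim_transform_eventually)
    show "(\<lambda>M. ip u (tr M h)) \<longlonglongrightarrow> ip u h"
      by (rule ip_continuous_right[OF l2_tr h lu tr_conv[OF h]])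
    show "\<forall>\<^sub>F M in sequentially. ip u (tr M h) = ip (Tm c u) (Tm c (tr M h))"
      unfolding eventually_sequentially
    proof (intro exI allI impI)
      fix M assume "M \<ge> N"
      show "ip u (tr M h) = ip (Tm c u) (Tm c (tr M h))"
        by (rule ip_Tm_fin[of M, symmetric]) (use u \<open>M \<ge> N\<close> in \<open>auto simp: tr_def\<close>)
    qed
  qed
  ultimately show ?thesis by (rule LIMSEQ_unique)
qed
end


lemma exhaust_seq:
  assumes "countable J"
  obtains F :: "nat \<Rightarrow> 'a set" where "\<And>N. finite (F N)" "incseq F" "\<And>N. F N \<subseteq> J" "\<And>x. x \<in> J \<Longrightarrow> \<exists>N. x \<in> F N"
proof (cases "J = {}")
  case True
  show ?thesis by (rule that[of "\<lambda>N. {}"]) (auto simp: True incseq_def)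
next
  case False
  define F where "F N = from_nat_into J ` {..<N}" for N
  show ?thesis
  proof (rule that[of F])
    show "finite (F N)" for N unfolding F_def by simp
    show "incseq F" unfolding F_def incseq_def by auto
    show "F N \<subseteq> J" for N unfolding F_def using from_nat_into[OF False] by auto
    show "\<exists>N. x \<in> F N" if "x \<in> J" for x
      using that assms unfolding F_def
      by (intro exI[of _ "Suc (to_nat_on J x)"]) (auto intro!: image_eqI[of _ _ "to_nat_on J x"])
  qed
qed

lemma nn_count_exhaust:
  fixes f :: "'a \<Rightarrow> ennreal"
  assumes fin: "\<And>N. finite (F N)" and inc: "incseq F" and sub: "\<And>N. F N \<subseteq> J"
    and cov: "\<And>x. x \<in> J \<Longrightarrow> \<exists>N. x \<in> F N"
  shows "(\<integral>\<^sup>+ x. f x \<partial>count_space J) = (SUP N. \<Sum>x\<in>F N. f x)"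
proof -
  have pt: "f x * indicator J x = (SUP N. f x * indicator (F N) x)" for x
  proof (cases "x \<in> J")
    case True
    then obtain N0 where N0: "x \<in> F N0" using cov by blast
    show ?thesis
    proof (rule antisym)
      show "f x * indicator J x \<le> (SUP N. f x * indicator (F N) x)"
        using True N0 by (intro SUP_upper2[of N0]) auto
      show "(SUP N. f x * indicator (F N) x) \<le> f x * indicator J x"
        using True sub by (intro SUP_least) (auto simp: indicator_def)
    qed
  next
    case False
    then have "x \<notin> F N" for N using sub by auto
    then show ?thesis using False by simp
  qed
  have "(\<integral>\<^sup>+ x. f x \<partial>count_space J) = (\<integral>\<^sup>+ x. f x * indicator J x \<partial>count_space UNIV)"
    by (rule nn_integral_count_space_indicator) (simp add: NO_MATCH_def)
  also have "\<dots> = (\<integral>\<^sup>+ x. (SUP N. f x * indicator (F N) x) \<partial>count_space UNIV)"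
    by (simp add: pt)
  also have "\<dots> = (SUP N. \<integral>\<^sup>+ x. f x * indicator (F N) x \<partial>count_space UNIV)"
  proof (rule nn_integral_monotone_convergence_SUP)
    show "incseq (\<lambda>N x. f x * indicator (F N) x)"
      using inc unfolding incseq_def le_fun_def
      by (auto intro!: mult_left_mono simp: indicator_def subset_iff)
  qed simp
  also have "(\<lambda>N. \<integral>\<^sup>+ x. f x * indicator (F N) x \<partial>count_space UNIV) = (\<lambda>N. \<Sum>x\<in>F N. f x)"
  proof
    fix N
    have "(\<integral>\<^sup>+ x. f x * indicator (F N) x \<partial>count_space UNIV) = (\<integral>\<^sup>+ x. f x \<partial>count_space (F N))"
      by (rule nn_integral_count_space_indicator[symmetric]) (simp add: NO_MATCH_def)
    also have "\<dots> = (\<Sum>x\<in>F N. f x)" by (rule nn_integral_count_space_finite[OF fin])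
    finally show "(\<integral>\<^sup>+ x. f x * indicator (F N) x \<partial>count_space UNIV) = (\<Sum>x\<in>F N. f x)" .
  qed
  finally show ?thesis .
qed

lemma Tm_alt: "Tm c a n = (\<Sum>i=0..n. c i * a (n - i))"
proof -
  have "Tm c a n = (\<Sum>i=0..n. a (n + 0 - i) * c (n - (n + 0 - i)))"
    unfolding Tm_def by (rule sum.atLeastAtMost_rev)
  also have "\<dots> = (\<Sum>i=0..n. c i * a (n - i))"
    by (rule sum.cong) (auto simp: mult.commute)
  finally show ?thesis .
qed

lemma taylor_coeff_Tm:
  assumes "th holomorphic_on ball 0 1" "h holomorphic_on ball 0 1"
  shows "taylor_coeff (\<lambda>z. th z * h z) = Tm (taylor_coeff th) (taylor_coeff h)"
  by (rule ext) (simp add: taylor_coeff_mult[OF assms] Tm_alt)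

lemma taylor_coeff_Tm':
  assumes "f holomorphic_on ball 0 1" "th holomorphic_on ball 0 1"
  shows "taylor_coeff (\<lambda>z. f z * th z) = Tm (taylor_coeff th) (taylor_coeff f)"
  by (rule ext) (simp add: taylor_coeff_mult[OF assms] Tm_def)

definition pv :: "nat \<Rightarrow> (nat \<Rightarrow> complex) \<Rightarrow> nat \<Rightarrow> complex" where
  "pv m a k = (if k \<le> m then cnj (a (m - k)) else 0)"

definition adjv :: "(nat \<Rightarrow> complex) \<Rightarrow> nat \<Rightarrow> (nat \<Rightarrow> complex) \<Rightarrow> nat \<Rightarrow> complex" where
  "adjv c m a l = (if l \<le> m then cnj (Tm c a (m - l)) else 0)"

lemma tri_swap:
  fixes f :: "nat \<Rightarrow> nat \<Rightarrow> complex"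
  shows "(\<Sum>i\<le>m. \<Sum>j=0..m-i. f i j) = (\<Sum>j\<le>m. \<Sum>i=0..m-j. f i j)"
proof -
  have e1: "(\<Sum>j=0..m-i. f i j) = (\<Sum>j\<le>m. if i + j \<le> m then f i j else 0)" if "i \<le> m" for i
    by (rule sum.mono_neutral_cong_left) (use that in auto)
  have e2: "(\<Sum>i=0..m-j. f i j) = (\<Sum>i\<le>m. if i + j \<le> m then f i j else 0)" if "j \<le> m" for j
    by (rule sum.mono_neutral_cong_left) (use that in auto)
  have "(\<Sum>i\<le>m. \<Sum>j=0..m-i. f i j) = (\<Sum>i\<le>m. \<Sum>j\<le>m. if i + j \<le> m then f i j else 0)"
    by (rule sum.cong[OF refl]) (simp add: e1)
  also have "\<dots> = (\<Sum>j\<le>m. \<Sum>i\<le>m. if i + j \<le> m then f i j else 0)" by (rule sum.swap)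
  also have "\<dots> = (\<Sum>j\<le>m. \<Sum>i=0..m-j. f i j)"
    by (rule sum.cong[OF refl]) (simp add: e2)
  finally show ?thesis .
qed

lemma adj_ip:
  shows "ip (pv m a) (Tm c h) = ip (adjv c m a) h"
proof -
  have "ip (pv m a) (Tm c h) = (\<Sum>k<Suc m. pv m a k * cnj (Tm c h k))"
    by (rule ip_fin) (simp add: pv_def)
  also have "\<dots> = cnj (\<Sum>k\<le>m. a (m - k) * Tm c h k)"
    by (simp add: pv_def lessThan_Suc_atMost)
  also have "(\<Sum>k\<le>m. a (m - k) * Tm c h k) = (\<Sum>j\<le>m. a j * Tm c h (m - j))"
  proof -
    have "(\<Sum>k=0..m. a (m - k) * Tm c h k) = (\<Sum>j=0..m. a (m - (m + 0 - j)) * Tm c h (m + 0 - j))"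
      by (rule sum.atLeastAtMost_rev)
    also have "\<dots> = (\<Sum>j=0..m. a j * Tm c h (m - j))" by (rule sum.cong) auto
    finally show ?thesis by (simp add: atLeast0AtMost)
  qed
  also have "\<dots> = (\<Sum>j\<le>m. \<Sum>i=0..m-j. a j * (h i * c (m - j - i)))"
    unfolding Tm_def by (simp add: sum_distrib_left)
  also have "\<dots> = (\<Sum>i\<le>m. \<Sum>j=0..m-i. a j * (h i * c (m - j - i)))"
    by (rule tri_swap[symmetric])
  also have "\<dots> = (\<Sum>i\<le>m. h i * Tm c a (m - i))"
    unfolding Tm_def by (simp add: sum_distrib_left mult_ac diff_commute; simp add: add.commute)
  also have "cnj \<dots> = (\<Sum>l<Suc m. adjv c m a l * cnj (h l))"
    by (simp add: adjv_def lessThan_Suc_atMost mult.commute)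
  also have "\<dots> = ip (adjv c m a) h"
    by (rule ip_fin[symmetric]) (simp add: adjv_def)
  finally show ?thesis .
qed

lemma nsq_pv: "nsq (pv m a) = (\<Sum>k\<le>m. (cmod (a k))\<^sup>2)"
proof -
  have "nsq (pv m a) = (\<Sum>k<Suc m. (cmod (pv m a k))\<^sup>2)" by (rule nsq_fin) (simp add: pv_def)
  also have "\<dots> = (\<Sum>k=0..m. (cmod (a (m - k)))\<^sup>2)" by (simp add: pv_def lessThan_Suc_atMost atLeast0AtMost)
  also have "\<dots> = (\<Sum>k=0..m. (cmod (a (m - (m + 0 - k))))\<^sup>2)" by (rule sum.atLeastAtMost_rev)
  also have "\<dots> = (\<Sum>k\<le>m. (cmod (a k))\<^sup>2)" by (simp add: atLeast0AtMost)
  finally show ?thesis .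
qed

lemma nsq_adjv: "nsq (adjv c m a) = (\<Sum>k\<le>m. (cmod (Tm c a k))\<^sup>2)"
proof -
  have "nsq (adjv c m a) = (\<Sum>k<Suc m. (cmod (adjv c m a k))\<^sup>2)" by (rule nsq_fin) (simp add: adjv_def)
  also have "\<dots> = (\<Sum>k=0..m. (cmod (Tm c a (m - k)))\<^sup>2)" by (simp add: adjv_def lessThan_Suc_atMost atLeast0AtMost)
  also have "\<dots> = (\<Sum>k=0..m. (cmod (Tm c a (m - (m + 0 - k))))\<^sup>2)" by (rule sum.atLeastAtMost_rev)
  also have "\<dots> = (\<Sum>k\<le>m. (cmod (Tm c a k))\<^sup>2)" by (simp add: atLeast0AtMost)
  finally show ?thesis .
qed


lemma parseval:
  fixes g :: "'i \<Rightarrow> complex \<Rightarrow> complex" and th :: "complex \<Rightarrow> complex"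
  assumes onb: "orthonormal_basis_of (model_space th) I g"
    and Tl2: "\<And>h. h \<in> H2 \<Longrightarrow> l2 (taylor_coeff (\<lambda>z. th z * h z))"
    and q: "l2 q" and qK: "\<And>h. h \<in> H2 \<Longrightarrow> ip q (taylor_coeff (\<lambda>z. th z * h z)) = 0"
  shows "(\<integral>\<^sup>+ n. ennreal ((cmod (ip (taylor_coeff (g n)) q))\<^sup>2) \<partial>count_space I) = ennreal (nsq q)"
proof -
  define G where "G n = taylor_coeff (g n)" for n
  have gH2: "g n \<in> H2" if "n \<in> I" for n
    using onb that unfolding orthonormal_basis_of_def model_space_def by auto
  have lG: "l2 (G n)" if "n \<in> I" for n unfolding G_def by (rule H2_l2[OF gH2[OF that]])
  have gK: "ip (G n) (taylor_coeff (\<lambda>z. th z * h z)) = 0" if "n \<in> I" "h \<in> H2" for n h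
    using onb that unfolding orthonormal_basis_of_def model_space_def G_def H2_inner_ip by auto
  have orth: "ip (G n) (G m) = (if n = m then 1 else 0)" if "n \<in> I" "m \<in> I" for n m
    using onb that unfolding orthonormal_basis_of_def G_def H2_inner_ip by auto
  have compl: "\<forall>k. taylor_coeff r k = 0"
    if "r \<in> H2" "\<And>h. h \<in> H2 \<Longrightarrow> ip (taylor_coeff r) (taylor_coeff (\<lambda>z. th z * h z)) = 0"
       "\<And>n. n \<in> I \<Longrightarrow> ip (taylor_coeff r) (G n) = 0" for r
    using onb that unfolding orthonormal_basis_of_def model_space_def G_def H2_inner_ip by auto
  define cf where "cf n = ip q (G n)" for n
  have cfc: "cmod (ip (G n) q) = cmod (cf n)" if "n \<in> I" for n
    unfolding cf_def using ip_cnj[OF q lG[OF that]] by simp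
  define S where "S D b = (\<lambda>k. \<Sum>n\<in>D. b n * G n k)" for D b
  have lS: "l2 (S D b)" if "finite D" "D \<subseteq> I" for D b
    unfolding S_def using that by (intro l2_sum l2_scale lG) auto
  have ipSG: "ip (S D b) (G m) = (if m \<in> D then b m else 0)" if "finite D" "D \<subseteq> I" "m \<in> I" for D b m
  proof -
    have "ip (S D b) (G m) = (\<Sum>n\<in>D. ip (\<lambda>k. b n * G n k) (G m))"
      unfolding S_def using that by (intro ip_sum_left l2_scale lG) auto
    also have "\<dots> = (\<Sum>n\<in>D. b n * (if n = m then 1 else 0))"
      using that by (intro sum.cong refl) (auto simp: ip_scale_left lG orth)
    also have "\<dots> = (if m \<in> D then b m else 0)"
      using that by (simp add: if_distrib cong: if_cong)
    finally show ?thesis .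
  qed
  have ipSq: "ip (S D b) q = (\<Sum>n\<in>D. b n * cnj (cf n))" if "finite D" "D \<subseteq> I" for D b
  proof -
    have "ip (S D b) q = (\<Sum>n\<in>D. ip (\<lambda>k. b n * G n k) q)"
      unfolding S_def using that q by (intro ip_sum_left l2_scale lG) auto
    also have "\<dots> = (\<Sum>n\<in>D. b n * cnj (cf n))"
      using that q by (intro sum.cong refl) (auto simp: ip_scale_left lG cf_def ip_cnj[OF q])
    finally show ?thesis .
  qed
  have nsqS: "nsq (S D b) = (\<Sum>n\<in>D. (cmod (b n))\<^sup>2)" if "finite D" "D \<subseteq> I" for D b
  proof -
    have "ip (S D b) (S D b) = (\<Sum>n\<in>D. ip (\<lambda>k. b n * G n k) (S D b))"
      unfolding S_def[of D b] using that by (intro ip_sum_left l2_scale lG lS[unfolded S_def]) auto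
    also have "\<dots> = (\<Sum>n\<in>D. b n * cnj (b n))"
    proof (intro sum.cong refl)
      fix n assume n: "n \<in> D"
      have "ip (\<lambda>k. b n * G n k) (S D b) = b n * ip (G n) (S D b)"
        using that n by (intro ip_scale_left lG lS) auto
      also have "ip (G n) (S D b) = cnj (ip (S D b) (G n))"
        using that n by (intro ip_cnj lG lS) auto
      also have "ip (S D b) (G n) = b n" using ipSG[OF that, of n] n that by auto
      finally show "ip (\<lambda>k. b n * G n k) (S D b) = b n * cnj (b n)" .
    qed
    also have "\<dots> = of_real (\<Sum>n\<in>D. (cmod (b n))\<^sup>2)"
      by (simp only: of_real_sum complex_norm_square)
    finally show ?thesis using ip_self[OF lS[OF that]] by (simp only: of_real_eq_iff)
  qed
  define x where "x D = (\<lambda>k. q k - S D cf k)" for D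
  have lx: "l2 (x D)" if "finite D" "D \<subseteq> I" for D
    unfolding x_def using that by (intro l2_diff q lS)
  have nsqx: "nsq (x D) = nsq q - (\<Sum>n\<in>D. (cmod (cf n))\<^sup>2)" if "finite D" "D \<subseteq> I" for D
  proof -
    have "nsq (x D) = nsq q + nsq (S D cf) - 2 * Re (ip q (S D cf))"
      unfolding x_def by (rule nsq_diff[OF q lS[OF that]])
    moreover have "ip q (S D cf) = cnj (ip (S D cf) q)" by (rule ip_cnj[OF lS[OF that] q])
    moreover have "ip (S D cf) q = of_real (\<Sum>n\<in>D. (cmod (cf n))\<^sup>2)"
      unfolding ipSq[OF that] by (simp only: of_real_sum complex_norm_square)
    ultimately show ?thesis using nsqS[OF that] by simp
  qed
  have bessel: "(\<Sum>n\<in>D. (cmod (cf n))\<^sup>2) \<le> nsq q" if "finite D" "D \<subseteq> I" for D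
    using nsqx[OF that] nsq_nonneg[OF lx[OF that]] by simp
  define J where "J = {n\<in>I. (cmod (cf n))\<^sup>2 \<noteq> 0}"
  have "(\<lambda>n. (cmod (cf n))\<^sup>2) summable_on I"
  proof (rule nonneg_bdd_above_summable_on)
    show "bdd_above (sum (\<lambda>n. (cmod (cf n))\<^sup>2) ` {F. F \<subseteq> I \<and> finite F})"
      using bessel by (intro bdd_aboveI[of _ "nsq q"]) auto
  qed auto
  then have cJ: "countable J" unfolding J_def by (rule summable_countable_real)
  obtain F where Ffin: "\<And>N. finite (F N)" and Finc: "incseq F" and FJ: "\<And>N. F N \<subseteq> J"
    and Fcov: "\<And>x. x \<in> J \<Longrightarrow> \<exists>N. x \<in> F N"
    using exhaust_seq[OF cJ] by blast
  have FI: "F N \<subseteq> I" for N using FJ unfolding J_def by blast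
  define P where "P N = (\<Sum>n\<in>F N. (cmod (cf n))\<^sup>2)" for N
  have Pinc: "incseq P"
    unfolding P_def incseq_def using Finc Ffin by (auto intro!: sum_mono2 simp: incseq_def)
  have Pbd: "P N \<le> nsq q" for N unfolding P_def by (rule bessel[OF Ffin FI])
  have Pconv: "P \<longlonglongrightarrow> (SUP N. P N)"
    by (rule LIMSEQ_incseq_SUP[OF _ Pinc]) (rule bdd_aboveI[of _ "nsq q"], use Pbd in auto)
  have PC: "Cauchy P" using Pconv by (auto intro: convergent_Cauchy convergentI)
  have dx: "nsq (\<lambda>k. x (F N) k - x (F N') k) = P N' - P N" if "N \<le> N'" for N N'
  proof -
    have sub: "F N \<subseteq> F N'" using Finc that by (simp add: incseq_def)
    have "(\<lambda>k. x (F N) k - x (F N') k) = S (F N' - F N) cf"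
      unfolding x_def S_def using sub Ffin by (auto simp: fun_eq_iff sum_diff)
    then have "nsq (\<lambda>k. x (F N) k - x (F N') k) = (\<Sum>n\<in>F N' - F N. (cmod (cf n))\<^sup>2)"
      using nsqS[of "F N' - F N" cf] Ffin FI by auto
    also have "\<dots> = P N' - P N" unfolding P_def using sub Ffin by (simp add: sum_diff)
    finally show ?thesis .
  qed
  have C: "\<exists>M. \<forall>N\<ge>M. \<forall>N'\<ge>M. nsq (\<lambda>k. x (F N) k - x (F N') k) < e" if e: "e > 0" for e
  proof -
    obtain M where M: "\<forall>m\<ge>M. \<forall>n\<ge>M. dist (P m) (P n) < e" using PC e unfolding Cauchy_def by blast
    show ?thesis
    proof (intro exI allI impI)
      fix N N' assume NN: "N \<ge> M" "N' \<ge> M"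
      show "nsq (\<lambda>k. x (F N) k - x (F N') k) < e"
      proof (cases "N \<le> N'")
        case True
        have "\<bar>P N' - P N\<bar> < e" using M NN by (auto simp: dist_real_def)
        then show ?thesis using dx[OF True] by simp
      next
        case False
        then have "N' \<le> N" by simp
        have "nsq (\<lambda>k. x (F N) k - x (F N') k) = nsq (\<lambda>k. x (F N') k - x (F N) k)"
          unfolding nsq_def by (simp add: norm_minus_commute)
        moreover have "\<bar>P N - P N'\<bar> < e" using M NN by (auto simp: dist_real_def)
        ultimately show ?thesis using dx[OF \<open>N' \<le> N\<close>] by simp
      qed
    qed
  qed
  obtain z where lz: "l2 z" and zc: "(\<lambda>N. nsq (\<lambda>k. x (F N) k - z k)) \<longlonglongrightarrow> 0"
    using l2_complete[of "\<lambda>N. x (F N)", OF lx[OF Ffin FI] C] by blast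
  have zG: "ip z (G m) = 0" if m: "m \<in> I" for m
  proof -
    have "(\<lambda>N. ip (x (F N)) (G m)) \<longlonglongrightarrow> ip z (G m)"
      by (rule ip_continuous[OF lx[OF Ffin FI] lz lG[OF m] zc])
    moreover have "(\<lambda>N. ip (x (F N)) (G m)) \<longlonglongrightarrow> 0"
    proof (rule Lim_transform_eventually[OF tendsto_const])
      have ev: "ip (x (F N)) (G m) = cf m - (if m \<in> F N then cf m else 0)" for N
        unfolding x_def using Ffin FI m
        by (subst ip_diff_left[OF q lS lG]) (auto simp: ipSG cf_def)
      show "\<forall>\<^sub>F N in sequentially. 0 = ip (x (F N)) (G m)"
      proof (cases "m \<in> J")
        case True
        then obtain N0 where "m \<in> F N0" using Fcov by blast
        then have "m \<in> F N" if "N \<ge> N0" for N using Finc that by (auto simp: incseq_def)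
        then show ?thesis unfolding eventually_sequentially ev by auto
      next
        case False
        then have "cf m = 0" using m unfolding J_def by auto
        then show ?thesis by (simp add: ev)
      qed
    qed
    ultimately show ?thesis by (rule LIMSEQ_unique)
  qed
  have zK: "ip z (taylor_coeff (\<lambda>z. th z * h z)) = 0" if h: "h \<in> H2" for h
  proof -
    have lT: "l2 (taylor_coeff (\<lambda>z. th z * h z))" by (rule Tl2[OF h])
    have "(\<lambda>N. ip (x (F N)) (taylor_coeff (\<lambda>z. th z * h z))) \<longlonglongrightarrow> ip z (taylor_coeff (\<lambda>z. th z * h z))"
      by (rule ip_continuous[OF lx[OF Ffin FI] lz lT zc])
    moreover have "ip (x (F N)) (taylor_coeff (\<lambda>z. th z * h z)) = 0" for N
    proof -
      have "ip (x (F N)) (taylor_coeff (\<lambda>z. th z * h z)) =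
            ip q (taylor_coeff (\<lambda>z. th z * h z)) - ip (S (F N) cf) (taylor_coeff (\<lambda>z. th z * h z))"
        unfolding x_def by (rule ip_diff_left[OF q lS[OF Ffin FI] lT])
      also have "ip (S (F N) cf) (taylor_coeff (\<lambda>z. th z * h z)) =
                 (\<Sum>n\<in>F N. ip (\<lambda>k. cf n * G n k) (taylor_coeff (\<lambda>z. th z * h z)))"
        unfolding S_def using Ffin FI lT by (intro ip_sum_left l2_scale lG) auto
      also have "\<dots> = 0"
      proof (intro sum.neutral ballI)
        fix n assume "n \<in> F N"
        then have n: "n \<in> I" using FI by blast
        show "ip (\<lambda>k. cf n * G n k) (taylor_coeff (\<lambda>z. th z * h z)) = 0"
          by (simp add: ip_scale_left[OF lG[OF n] lT] gK[OF n h])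
      qed
      finally show ?thesis using qK[OF h] by simp
    qed
    ultimately have "(\<lambda>N. 0::complex) \<longlonglongrightarrow> ip z (taylor_coeff (\<lambda>z. th z * h z))" by simp
    then show ?thesis by (rule LIMSEQ_unique[OF tendsto_const, symmetric])
  qed
  have rz: "mkf z \<in> H2" "taylor_coeff (mkf z) = z" by (rule mkf_H2[OF lz])+
  have z0: "\<forall>k. z k = 0"
    using compl[OF rz(1)] zK zG unfolding rz(2) by blast
  have "(\<lambda>N. nsq (x (F N))) \<longlonglongrightarrow> 0"
    using zc z0 by simp
  then have "(\<lambda>N. nsq q - P N) \<longlonglongrightarrow> 0"
    using nsqx[OF Ffin FI] unfolding P_def by simp
  then have "(\<lambda>N. nsq q - (nsq q - P N)) \<longlonglongrightarrow> nsq q - 0"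
    by (intro tendsto_intros)
  then have PL: "P \<longlonglongrightarrow> nsq q" by simp
  have "(\<integral>\<^sup>+ n. ennreal ((cmod (ip (taylor_coeff (g n)) q))\<^sup>2) \<partial>count_space I)
      = (\<integral>\<^sup>+ n. ennreal ((cmod (cf n))\<^sup>2) \<partial>count_space I)"
    by (rule nn_integral_cong) (simp add: cfc[unfolded G_def])
  also have "\<dots> = (\<integral>\<^sup>+ n. ennreal ((cmod (cf n))\<^sup>2) \<partial>count_space J)"
    by (rule nn_integral_count_space_eq) (auto simp: J_def)
  also have "\<dots> = (SUP N. \<Sum>n\<in>F N. ennreal ((cmod (cf n))\<^sup>2))"
    by (rule nn_count_exhaust[OF Ffin Finc FJ Fcov])
  also have "\<dots> = (SUP N. ennreal (P N))" unfolding P_def by simp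
  also have "\<dots> = ennreal (nsq q)"
  proof (rule LIMSEQ_unique)
    show "(\<lambda>N. ennreal (P N)) \<longlonglongrightarrow> (SUP N. ennreal (P N))"
      by (rule LIMSEQ_SUP) (use Pinc in \<open>auto simp: incseq_def intro: ennreal_leI\<close>)
    show "(\<lambda>N. ennreal (P N)) \<longlonglongrightarrow> ennreal (nsq q)"
      by (rule tendsto_ennrealI[OF PL])
  qed
  finally show ?thesis .
qed


lemma ip_fin2:
  assumes "\<And>k. k \<ge> N \<Longrightarrow> b k = 0"
  shows "ip a b = (\<Sum>k<N. a k * cnj (b k))"
  unfolding ip_def by (rule suminf_finite) (use assms in auto)

lemma inner_toep: "inner_function th \<Longrightarrow> toep (taylor_coeff th)"
  unfolding toep_def using inner_l2 inner_autocorr by blast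

lemma inner_hol: "inner_function th \<Longrightarrow> th holomorphic_on ball 0 1"
  using inner_basic by blast

lemma per_m:
  fixes g :: "'i \<Rightarrow> complex \<Rightarrow> complex" and th f :: "complex \<Rightarrow> complex"
  assumes onb: "orthonormal_basis_of (model_space th) I g"
    and inn: "inner_function th" and f: "f \<in> H2"
  defines "a \<equiv> taylor_coeff f" and "c \<equiv> taylor_coeff th"
  shows "(\<integral>\<^sup>+ n. ennreal ((cmod (taylor_coeff (\<lambda>z. f z * g n z) m))\<^sup>2) \<partial>count_space I)
           = ennreal ((\<Sum>k\<le>m. (cmod (a k))\<^sup>2) - (\<Sum>k\<le>m. (cmod (Tm c a k))\<^sup>2))"
    and "(\<Sum>k\<le>m. (cmod (Tm c a k))\<^sup>2) \<le> (\<Sum>k\<le>m. (cmod (a k))\<^sup>2)"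
proof -
  interpret toep c unfolding c_def by (rule inner_toep[OF inn])
  have holth: "th holomorphic_on ball 0 1" by (rule inner_hol[OF inn])
  have holf: "f holomorphic_on ball 0 1" by (rule H2_hol[OF f])
  have la: "l2 a" unfolding a_def by (rule H2_l2[OF f])
  have coT: "taylor_coeff (\<lambda>z. th z * h z) = Tm c (taylor_coeff h)" if "h \<in> H2" for h
    unfolding c_def by (rule taylor_coeff_Tm[OF holth H2_hol[OF that]])
  have Tl2: "l2 (taylor_coeff (\<lambda>z. th z * h z))" if "h \<in> H2" for h
    unfolding coT[OF that] by (rule T_conv(1)[OF H2_l2[OF that]])
  define G where "G n = taylor_coeff (g n)" for n
  have gH2: "g n \<in> H2" if "n \<in> I" for n
    using onb that unfolding orthonormal_basis_of_def model_space_def by auto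
  have lG: "l2 (G n)" if "n \<in> I" for n unfolding G_def by (rule H2_l2[OF gH2[OF that]])
  have gK: "ip (G n) (taylor_coeff (\<lambda>z. th z * h z)) = 0" if "n \<in> I" "h \<in> H2" for n h
    using onb that unfolding orthonormal_basis_of_def model_space_def G_def H2_inner_ip by auto
  define p where "p = pv m a"
  define u where "u = adjv c m a"
  define q where "q k = p k - Tm c u k" for k
  have pfin: "\<And>k. k \<ge> Suc m \<Longrightarrow> p k = 0" unfolding p_def pv_def by auto
  have ufin: "\<And>k. k \<ge> Suc m \<Longrightarrow> u k = 0" unfolding u_def adjv_def by auto
  have lp: "l2 p" by (rule l2_finite_support[OF pfin])
  have lu: "l2 u" by (rule l2_finite_support[OF ufin])
  have lTu: "l2 (Tm c u)" by (rule l2_Tm_fin[OF ufin])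
  have lq: "l2 q" unfolding q_def by (rule l2_diff[OF lp lTu])
  have U: "mkf u \<in> H2" "taylor_coeff (mkf u) = u" by (rule mkf_H2[OF lu])+
  have Tu: "Tm c u = taylor_coeff (\<lambda>z. th z * mkf u z)" using coT[OF U(1)] U(2) by simp
  have coef: "taylor_coeff (\<lambda>z. f z * g n z) m = ip (G n) q" if n: "n \<in> I" for n
  proof -
    have "taylor_coeff (\<lambda>z. f z * g n z) m = (\<Sum>i=0..m. a i * G n (m - i))"
      unfolding a_def G_def by (rule taylor_coeff_mult[OF holf H2_hol[OF gH2[OF n]]])
    also have "\<dots> = (\<Sum>i=0..m. a (m + 0 - i) * G n (m - (m + 0 - i)))" by (rule sum.atLeastAtMost_rev)
    also have "\<dots> = (\<Sum>k<Suc m. G n k * cnj (p k))"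
      unfolding p_def pv_def by (simp add: atLeast0AtMost lessThan_Suc_atMost mult.commute)
    also have "\<dots> = ip (G n) p" by (rule ip_fin2[symmetric]) (use pfin in auto)
    also have "\<dots> = ip (G n) q"
    proof -
      have "ip (G n) (Tm c u) = 0" unfolding Tu by (rule gK[OF n U(1)])
      then have z: "ip (Tm c u) (G n) = 0" using ip_cnj[OF lG[OF n] lTu] by simp
      have "ip (G n) q = cnj (ip q (G n))" by (rule ip_cnj[OF lq lG[OF n]])
      also have "ip q (G n) = ip p (G n) - ip (Tm c u) (G n)"
        unfolding q_def by (rule ip_diff_left[OF lp lTu lG[OF n]])
      also have "cnj (ip p (G n) - ip (Tm c u) (G n)) = ip (G n) p"
        using z ip_cnj[OF lG[OF n] lp] by simp
      finally show ?thesis by simp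
    qed
    finally show ?thesis .
  qed
  have qK: "ip q (taylor_coeff (\<lambda>z. th z * h z)) = 0" if h: "h \<in> H2" for h
  proof -
    define H where "H = taylor_coeff h"
    have lH: "l2 H" unfolding H_def by (rule H2_l2[OF h])
    have lTH: "l2 (Tm c H)" by (rule T_conv(1)[OF lH])
    have "ip q (taylor_coeff (\<lambda>z. th z * h z)) = ip p (Tm c H) - ip (Tm c u) (Tm c H)"
      unfolding coT[OF h] q_def H_def[symmetric] by (rule ip_diff_left[OF lp lTu lTH])
    also have "ip p (Tm c H) = ip u H" unfolding p_def u_def by (rule adj_ip)
    also have "ip (Tm c u) (Tm c H) = ip u H" by (rule ip_Tm_mixed[OF ufin lH])
    finally show ?thesis by simp
  qed
  have pars: "(\<integral>\<^sup>+ n. ennreal ((cmod (ip (taylor_coeff (g n)) q))\<^sup>2) \<partial>count_space I) = ennreal (nsq q)"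
    by (rule parseval[OF onb Tl2 lq qK])
  have nq: "nsq q = (\<Sum>k\<le>m. (cmod (a k))\<^sup>2) - (\<Sum>k\<le>m. (cmod (Tm c a k))\<^sup>2)"
  proof -
    have "nsq q = nsq p + nsq (Tm c u) - 2 * Re (ip p (Tm c u))"
      unfolding q_def by (rule nsq_diff[OF lp lTu])
    also have "ip p (Tm c u) = ip u u" unfolding p_def u_def by (rule adj_ip)
    also have "ip u u = of_real (nsq u)" by (rule ip_self[OF lu])
    also have "nsq (Tm c u) = nsq u" by (rule nsq_Tm_fin[OF ufin])
    finally have "nsq q = nsq p - nsq u" by simp
    then show ?thesis unfolding p_def u_def nsq_pv nsq_adjv .
  qed
  have "(\<integral>\<^sup>+ n. ennreal ((cmod (taylor_coeff (\<lambda>z. f z * g n z) m))\<^sup>2) \<partial>count_space I)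
       = (\<integral>\<^sup>+ n. ennreal ((cmod (ip (taylor_coeff (g n)) q))\<^sup>2) \<partial>count_space I)"
    by (rule nn_integral_cong) (simp add: coef G_def)
  then show "(\<integral>\<^sup>+ n. ennreal ((cmod (taylor_coeff (\<lambda>z. f z * g n z) m))\<^sup>2) \<partial>count_space I)
           = ennreal ((\<Sum>k\<le>m. (cmod (a k))\<^sup>2) - (\<Sum>k\<le>m. (cmod (Tm c a k))\<^sup>2))"
    using pars nq by simp
  show "(\<Sum>k\<le>m. (cmod (Tm c a k))\<^sup>2) \<le> (\<Sum>k\<le>m. (cmod (a k))\<^sup>2)"
    using nq nsq_nonneg[OF lq] by simp
qed


lemma swap_ennreal:
  fixes F :: "nat \<Rightarrow> nat \<Rightarrow> ennreal"
  shows "(\<Sum>k. \<Sum>j. F j k) = (\<Sum>j. \<Sum>k. F j k)"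
proof -
  have "(\<Sum>k. \<Sum>j. F j k) = (\<integral>\<^sup>+ k. (\<Sum>j. F j k) \<partial>count_space UNIV)"
    by (rule nn_integral_count_space_nat[symmetric])
  also have "\<dots> = (\<Sum>j. \<integral>\<^sup>+ k. F j k \<partial>count_space UNIV)"
    by (rule nn_integral_suminf) simp
  also have "\<dots> = (\<Sum>j. \<Sum>k. F j k)" by (simp add: nn_integral_count_space_nat)
  finally show ?thesis .
qed

lemma shift_ennreal:
  fixes F :: "nat \<Rightarrow> ennreal"
  shows "(\<Sum>k. if j \<le> k then F k else 0) = (\<Sum>k. F (k + j))"
proof -
  have b: "bij_betw (\<lambda>k. k + j) UNIV {j..}"
    by (rule bij_betw_byWitness[where f'="\<lambda>k. k - j"]) auto
  have "(\<Sum>k. F (k + j)) = (\<integral>\<^sup>+ k. F (k + j) \<partial>count_space UNIV)"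
    by (rule nn_integral_count_space_nat[symmetric])
  also have "\<dots> = (\<integral>\<^sup>+ k. F k \<partial>count_space {j..})"
    by (rule nn_integral_bij_count_space[OF b])
  also have "\<dots> = (\<integral>\<^sup>+ k. F k * indicator {j..} k \<partial>count_space UNIV)"
    by (rule nn_integral_count_space_indicator) (simp add: NO_MATCH_def)
  also have "\<dots> = (\<integral>\<^sup>+ k. (if j \<le> k then F k else 0) \<partial>count_space UNIV)"
    by (rule nn_integral_cong) (simp add: indicator_def)
  also have "\<dots> = (\<Sum>k. if j \<le> k then F k else 0)" by (rule nn_integral_count_space_nat)
  finally show ?thesis ..
qed

lemma wnorm_decomp:
  assumes nn: "\<And>j. 0 \<le> v (Suc j)" and tele: "\<And>k. w (Suc k) = (\<Sum>j\<le>k. v (Suc j))"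
  shows "wnorm_sq w H = (\<Sum>j. ennreal (v (Suc j)) * (\<Sum>k. ennreal ((cmod (taylor_coeff H (Suc (k + j))))\<^sup>2)))"
proof -
  define x where "x k = (cmod (taylor_coeff H (Suc k)))\<^sup>2" for k
  have xn: "0 \<le> x k" for k unfolding x_def by simp
  have "ennreal (w (Suc k) * x k) = (\<Sum>j. if j \<le> k then ennreal (v (Suc j)) * ennreal (x k) else 0)" for k
  proof -
    have "ennreal (w (Suc k) * x k) = ennreal (\<Sum>j\<le>k. v (Suc j) * x k)"
      unfolding tele by (simp add: sum_distrib_right)
    also have "\<dots> = (\<Sum>j\<le>k. ennreal (v (Suc j) * x k))"
      by (rule sum_ennreal[symmetric]) (simp add: nn xn)
    also have "\<dots> = (\<Sum>j\<le>k. ennreal (v (Suc j)) * ennreal (x k))"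
      by (simp add: ennreal_mult nn xn)
    also have "\<dots> = (\<Sum>j. if j \<le> k then ennreal (v (Suc j)) * ennreal (x k) else 0)"
      by (subst suminf_finite[of "{..k}"]) auto
    finally show ?thesis .
  qed
  then have "wnorm_sq w H = (\<Sum>k. \<Sum>j. if j \<le> k then ennreal (v (Suc j)) * ennreal (x k) else 0)"
    unfolding wnorm_sq_def x_def by simp
  also have "\<dots> = (\<Sum>j. \<Sum>k. if j \<le> k then ennreal (v (Suc j)) * ennreal (x k) else 0)"
    by (rule swap_ennreal)
  also have "\<dots> = (\<Sum>j. ennreal (v (Suc j)) * (\<Sum>k. ennreal (x (k + j))))"
    by (simp add: shift_ennreal)
  finally show ?thesis unfolding x_def by simp
qed

lemma tail_real:
  assumes "l2 x"
  shows "(\<Sum>k. ennreal ((cmod (x (Suc (k + j))))\<^sup>2)) = ennreal (nsq x - (\<Sum>k\<le>j. (cmod (x k))\<^sup>2))"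
proof -
  have s: "summable (\<lambda>k. (cmod (x k))\<^sup>2)" using assms unfolding l2_def .
  have "(\<Sum>k. ennreal ((cmod (x (Suc (k + j))))\<^sup>2)) = (\<Sum>k. ennreal ((cmod (x (k + Suc j)))\<^sup>2))" by simp
  also have "\<dots> = ennreal (\<Sum>k. (cmod (x (k + Suc j)))\<^sup>2)"
    by (rule suminf_ennreal2) (use summable_ignore_initial_segment[OF s, of "Suc j"] in auto)
  also have "(\<Sum>k. (cmod (x (k + Suc j)))\<^sup>2) = nsq x - (\<Sum>k<Suc j. (cmod (x k))\<^sup>2)"
    unfolding nsq_def by (rule suminf_minus_initial_segment[OF s])
  finally show ?thesis by (simp add: lessThan_Suc_atMost)
qed


theorem theorem3p4:
  fixes w :: "nat \<Rightarrow> real" and f \<theta> :: "complex \<Rightarrow> complex"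
    and I :: "'i set" and g :: "'i \<Rightarrow> complex \<Rightarrow> complex"
  assumes w_mono: "\<And>k. k \<ge> 1 \<Longrightarrow> w k \<le> w (Suc k)"
    and w1: "w 1 \<ge> 0"
    and f: "f \<in> H2"
    and inner: "inner_function \<theta>"
    and onb: "orthonormal_basis_of (model_space \<theta>) I g"
  shows "wnorm_sq w (\<lambda>z. f z * \<theta> z)
         = wnorm_sq w f
           + (\<integral>\<^sup>+ n. wnorm_sq (\<lambda>k. if k \<le> 1 then w 1 else w k - w (k - 1))
                                (\<lambda>z. z * f z * g n z) \<partial>count_space I)"
proof -
  define v where "v k = (if k \<le> 1 then w 1 else w k - w (k - 1))" for k
  have vnn: "0 \<le> v (Suc j)" for j
  proof (cases j)
    case 0 then show ?thesis using w1 by (simp add: v_def)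
  next
    case (Suc i)
    then show ?thesis using w_mono[of "Suc i"] by (simp add: v_def)
  qed
  have tele: "w (Suc k) = (\<Sum>j\<le>k. v (Suc j))" for k
  proof (induction k)
    case 0 then show ?case by (simp add: v_def)
  next
    case (Suc k) then show ?case by (simp add: v_def)
  qed
  define a where "a = taylor_coeff f"
  define c where "c = taylor_coeff \<theta>"
  interpret toep c unfolding c_def by (rule inner_toep[OF inner])
  have holth: "\<theta> holomorphic_on ball 0 1" by (rule inner_hol[OF inner])
  have holf: "f holomorphic_on ball 0 1" by (rule H2_hol[OF f])
  have la: "l2 a" unfolding a_def by (rule H2_l2[OF f])
  have coft: "taylor_coeff (\<lambda>z. f z * \<theta> z) = Tm c a"
    unfolding a_def c_def by (rule taylor_coeff_Tm'[OF holf holth])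
  have lT: "l2 (Tm c a)" by (rule T_conv(1)[OF la])
  have nT: "nsq (Tm c a) = nsq a" by (rule nsq_Tm[OF la])
  define SA where "SA j = (\<Sum>k\<le>j. (cmod (a k))\<^sup>2)" for j
  define ST where "ST j = (\<Sum>k\<le>j. (cmod (Tm c a k))\<^sup>2)" for j
  have L: "wnorm_sq w (\<lambda>z. f z * \<theta> z) = (\<Sum>j. ennreal (v (Suc j)) * ennreal (nsq a - ST j))"
    unfolding wnorm_decomp[OF vnn tele] coft tail_real[OF lT] nT ST_def ..
  have R1: "wnorm_sq w f = (\<Sum>j. ennreal (v (Suc j)) * ennreal (nsq a - SA j))"
    unfolding wnorm_decomp[OF vnn tele] a_def[symmetric] tail_real[OF la] SA_def ..
  have gH2: "g n \<in> H2" if "n \<in> I" for n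
    using onb that unfolding orthonormal_basis_of_def model_space_def by auto
  have R2: "(\<integral>\<^sup>+ n. wnorm_sq v (\<lambda>z. z * f z * g n z) \<partial>count_space I)
          = (\<Sum>j. ennreal (v (Suc j)) * ennreal (SA j - ST j))"
  proof -
    have "(\<integral>\<^sup>+ n. wnorm_sq v (\<lambda>z. z * f z * g n z) \<partial>count_space I)
        = (\<integral>\<^sup>+ n. (\<Sum>j. ennreal (v (Suc j)) * ennreal ((cmod (taylor_coeff (\<lambda>z. f z * g n z) j))\<^sup>2)) \<partial>count_space I)"
    proof (rule nn_integral_cong)
      fix n assume "n \<in> space (count_space I)"
      then have n: "n \<in> I" by simp
      have hol: "(\<lambda>z. f z * g n z) holomorphic_on ball 0 1"
        by (intro holomorphic_on_mult holf H2_hol[OF gH2[OF n]])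
      have e: "(\<lambda>z. z * f z * g n z) = (\<lambda>z. z * (f z * g n z))" by (simp add: mult.assoc)
      show "wnorm_sq v (\<lambda>z. z * f z * g n z) =
            (\<Sum>j. ennreal (v (Suc j)) * ennreal ((cmod (taylor_coeff (\<lambda>z. f z * g n z) j))\<^sup>2))"
        unfolding wnorm_sq_def e taylor_coeff_shift[OF hol] by (simp add: ennreal_mult vnn)
    qed
    also have "\<dots> = (\<Sum>j. \<integral>\<^sup>+ n. ennreal (v (Suc j)) * ennreal ((cmod (taylor_coeff (\<lambda>z. f z * g n z) j))\<^sup>2) \<partial>count_space I)"
      by (rule nn_integral_suminf) simp
    also have "\<dots> = (\<Sum>j. ennreal (v (Suc j)) * (\<integral>\<^sup>+ n. ennreal ((cmod (taylor_coeff (\<lambda>z. f z * g n z) j))\<^sup>2) \<partial>count_space I))"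
      by (simp add: nn_integral_cmult)
    also have "\<dots> = (\<Sum>j. ennreal (v (Suc j)) * ennreal (SA j - ST j))"
      unfolding SA_def ST_def a_def c_def per_m(1)[OF onb inner f] ..
    finally show ?thesis .
  qed
  have comb: "ennreal (nsq a - SA j) + ennreal (SA j - ST j) = ennreal (nsq a - ST j)" for j
  proof -
    have "SA j \<le> nsq a" unfolding SA_def by (rule partial_le_nsq[OF la]) simp
    moreover have "ST j \<le> SA j" unfolding SA_def ST_def a_def c_def by (rule per_m(2)[OF onb inner f])
    ultimately show ?thesis by (simp flip: ennreal_plus)
  qed
  have "wnorm_sq w f + (\<integral>\<^sup>+ n. wnorm_sq v (\<lambda>z. z * f z * g n z) \<partial>count_space I)
      = (\<Sum>j. ennreal (v (Suc j)) * ennreal (nsq a - SA j) + ennreal (v (Suc j)) * ennreal (SA j - ST j))"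
    unfolding R1 R2 by (rule suminf_add[OF summableI summableI])
  also have "\<dots> = (\<Sum>j. ennreal (v (Suc j)) * ennreal (nsq a - ST j))"
    by (simp add: distrib_left[symmetric] comb)
  finally show ?thesis unfolding L v_def by simp
qed


end
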